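(* The function $Z^{\rm FD}_{\rm D}(\mathbf c)=-C^*(\mathbf c)+\sum_{d\in\mathcal D}\boldsymbol\mu^d(\mathbf c)\cdot\tilde{\mathbf q}^d$ is smooth and concave with respect to $\mathbf c$, and its gradient is $$\nabla_{\mathbf c}Z^{\rm FD}_{\rm D}(\mathbf c)=\mathbf X(\mathbf c)-\mathbf c^{-1}(\mathbf c),$$ where $\mathbf X(\mathbf t)\equiv\sum_{d\in\mathcal D}\mathbf x^d(\mathbf t)$ is the total link flow pattern obtained from the NGEV assignment with fixed link cost pattern $\mathbf t$.
   Context: $\mathcal G=(\mathcal N,\mathcal L)$ is a directed graph with successor sets $\mathcal F(i)$ and predecessor sets $\mathcal B(i)$; $\mathcal O,\mathcal D\subseteq\mathcal N$ origins and destinations. For each destination $d$: demands $q^d_i\ge0$; $\tilde q^d_i=q^d_i$ ($i\ne d$), $\tilde q^d_d=-\sum_{o\in\mathcal O}q^d_o$; scale parameters $\theta^d_i>0$; allocation parameters $\alpha^d_{ji}\ge0$ with $\sum_{i\in\mathcal B(j)}\alpha^d_{ji}=1$. For a link cost vector $\mathbf c$, $\boldsymbol\mu^d(\mathbf c)$ solves $1=\sum_{j\in\mathcal F(i)}\alpha^d_{ji}e^{-\theta^d_i(c_{ij}+\mu^d_j-\mu^d_i)}$ for all $i\in\mathcal N$. The NGEV assignment with cost $\mathbf t$ produces flows $\mathbf x^d(\mathbf t)$ via: $p^d_{ij|i}=\frac{\alpha^d_{ji}e^{-\theta^d_i(t_{ij}+\mu^d_j)}}{\sum_{j'\in\mathcal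 F(i)}\alpha^d_{j'i}e^{-\theta^d_i(t_{ij'}+\mu^d_{j'})}}$, $x^d_{ij}=p^d_{ij|i}z^d_i$, $z^d_i=q^d_i+\sum_{h\in\mathcal B(i)}x^d_{hi}$, with $\boldsymbol\mu^d=\boldsymbol\mu^d(\mathbf t)$. The link cost map $\mathbf c(\mathbf X):\mathbb R_+^{|\mathcal L|}\to\mathbb R_+^{|\mathcal L|}$ is continuous, single-valued, with symmetric Jacobian and strictly monotone; $\mathbf c^{-1}$ is its inverse; $C(\mathbf X)=\oint_{\mathbf X}\mathbf c(\mathbf X)\,\mathrm d\mathbf X$ and $C^*(\mathbf c)=\max_{\mathbf X}[\mathbf c\cdot\mathbf X-C(\mathbf X)]=\oint_{\mathbf c}\mathbf c^{-1}(\mathbf c)\,\mathrm d\mathbf c$ is its conjugate. *)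

theory Defs
  imports "HOL-Analysis.Analysis"
begin

text \<open>
Network: nodes form a finite type 'n, links form a finite type 'l; each link l
goes from node src l (tail) to node tgt l (head).  Destination-specific data (alpha, theta, q) are passed
already specialised to one destination d unless indicated otherwise.
\<close>

definition nonneg_orthant :: "(real ^ 'l) set" where
  "nonneg_orthant = {X. \<forall>l. 0 \<le> X $ l}"

definition mu_eqs ::
  "('l \<Rightarrow> 'n) \<Rightarrow> ('l \<Rightarrow> 'n) \<Rightarrow> ('l \<Rightarrow> real) \<Rightarrow> ('n \<Rightarrow> real) \<Rightarrow> 'n
   \<Rightarrow> real ^ 'l \<Rightarrow> ('n \<Rightarrow> real) \<Rightarrow> bool" where
  "mu_eqs src tgt alpha theta d c mu \<longleftrightarrow>
     mu d = 0 \<and>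
     (\<forall>i. i \<noteq> d \<longrightarrow>
        (\<Sum>l\<in>{l. src l = i}. alpha l * exp (- theta i * (c $ l + mu (tgt l) - mu i))) = 1)"

definition mu_of ::
  "('l \<Rightarrow> 'n) \<Rightarrow> ('l \<Rightarrow> 'n) \<Rightarrow> ('l \<Rightarrow> real) \<Rightarrow> ('n \<Rightarrow> real) \<Rightarrow> 'n
   \<Rightarrow> real ^ 'l \<Rightarrow> 'n \<Rightarrow> real" where
  "mu_of src tgt alpha theta d c = (THE mu. mu_eqs src tgt alpha theta d c mu)"

definition ngev_prob ::
  "('l \<Rightarrow> 'n) \<Rightarrow> ('l \<Rightarrow> 'n) \<Rightarrow> ('l \<Rightarrow> real) \<Rightarrow> ('n \<Rightarrow> real) \<Rightarrow> ('n \<Rightarrow> real)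
   \<Rightarrow> real ^ 'l \<Rightarrow> 'l \<Rightarrow> real" where
  "ngev_prob src tgt alpha theta mu t l =
     alpha l * exp (- theta (src l) * (t $ l + mu (tgt l))) /
     (\<Sum>l'\<in>{l'. src l' = src l}. alpha l' * exp (- theta (src l) * (t $ l' + mu (tgt l'))))"

definition flow_eqs ::
  "('l \<Rightarrow> 'n) \<Rightarrow> ('l \<Rightarrow> 'n) \<Rightarrow> ('l \<Rightarrow> real) \<Rightarrow> 'n \<Rightarrow> ('n \<Rightarrow> real)
   \<Rightarrow> real ^ 'l \<Rightarrow> bool" where
  "flow_eqs src tgt p d q x \<longleftrightarrow>
     (\<forall>l. x $ l = (if src l = d then 0
                  else p l * (q (src l) + (\<Sum>h\<in>{h. tgt h = src l}. x $ h))))"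

definition ngev_flow ::
  "('l \<Rightarrow> 'n) \<Rightarrow> ('l \<Rightarrow> 'n) \<Rightarrow> ('l \<Rightarrow> real) \<Rightarrow> ('n \<Rightarrow> real) \<Rightarrow> 'n \<Rightarrow> ('n \<Rightarrow> real)
   \<Rightarrow> real ^ 'l \<Rightarrow> real ^ 'l" where
  "ngev_flow src tgt alpha theta d q t =
     (THE x. flow_eqs src tgt (ngev_prob src tgt alpha theta (mu_of src tgt alpha theta d t) t) d q x)"

definition total_flow ::
  "('l \<Rightarrow> 'n) \<Rightarrow> ('l \<Rightarrow> 'n) \<Rightarrow> ('n \<Rightarrow> 'l \<Rightarrow> real) \<Rightarrow> ('n \<Rightarrow> 'n \<Rightarrow> real) \<Rightarrow> 'n set
   \<Rightarrow> ('n \<Rightarrow> 'n \<Rightarrow> real) \<Rightarrow> real ^ 'l \<Rightarrow> real ^ 'l" where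
  "total_flow src tgt alpha theta D q t =
     (\<Sum>d\<in>D. ngev_flow src tgt (alpha d) (theta d) d (q d) t)"

definition qtilde :: "'n set \<Rightarrow> ('n \<Rightarrow> real) \<Rightarrow> 'n \<Rightarrow> 'n \<Rightarrow> real" where
  "qtilde Orig q d i = (if i = d then - (\<Sum>r\<in>Orig. q r) else q i)"

text \<open>Potential C(X) = line integral of c from 0 to X (path independent since the
Jacobian is symmetric), its conjugate C*, and the inverse cost map.\<close>
definition Cpot :: "(real ^ 'l \<Rightarrow> real ^ 'l) \<Rightarrow> real ^ 'l \<Rightarrow> real" where
  "Cpot cm X = integral {0..1} (\<lambda>s. cm (s *\<^sub>R X) \<bullet> X)"

definition Cstar :: "(real ^ 'l \<Rightarrow> real ^ 'l) \<Rightarrow> real ^ 'l \<Rightarrow> real" where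
  "Cstar cm c = (SUP X\<in>nonneg_orthant. c \<bullet> X - Cpot cm X)"

definition cinv :: "(real ^ 'l \<Rightarrow> real ^ 'l) \<Rightarrow> real ^ 'l \<Rightarrow> real ^ 'l" where
  "cinv cm = the_inv_into nonneg_orthant cm"

definition Z_FD_D ::
  "('l \<Rightarrow> 'n) \<Rightarrow> ('l \<Rightarrow> 'n) \<Rightarrow> ('n \<Rightarrow> 'l \<Rightarrow> real) \<Rightarrow> ('n \<Rightarrow> 'n \<Rightarrow> real) \<Rightarrow> 'n set
   \<Rightarrow> 'n set \<Rightarrow> ('n \<Rightarrow> 'n \<Rightarrow> real) \<Rightarrow> (real ^ 'l \<Rightarrow> real ^ 'l) \<Rightarrow> real ^ 'l \<Rightarrow> real" where
  "Z_FD_D src tgt alpha theta Orig D q cm c =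
     - Cstar cm c +
     (\<Sum>d\<in>D. \<Sum>i\<in>UNIV. mu_of src tgt (alpha d) (theta d) d c i * qtilde Orig (q d) d i)"

end

theory Submission
  imports Defs
begin

definition seg_int :: "('a::euclidean_space \<Rightarrow> 'a) \<Rightarrow> 'a \<Rightarrow> 'a \<Rightarrow> real" where
  "seg_int F A B = integral {0..1} (\<lambda>s. F (A + s *\<^sub>R (B - A)) \<bullet> (B - A))"

lemma seg_in_convex:
  assumes "convex S" "A \<in> S" "B \<in> S" "0 \<le> s" "s \<le> 1"
  shows "A + s *\<^sub>R (B - A) \<in> S"
proof -
  have "A + s *\<^sub>R (B - A) = (1 - s) *\<^sub>R A + s *\<^sub>R B" by (simp add: algebra_simps)
  thus ?thesis using assms convexD_alt by (metis convex_alt)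
qed

lemma seg_cont:
  assumes "convex S" "continuous_on S F" "A \<in> S" "B \<in> S" "0 \<le> a" "b \<le> 1"
  shows "continuous_on {a..b} (\<lambda>s. F (A + s *\<^sub>R (B - A)) \<bullet> (B - A))"
proof -
  have "continuous_on {a..b} (\<lambda>s. A + s *\<^sub>R (B - A))" by (intro continuous_intros)
  moreover have "(\<lambda>s. A + s *\<^sub>R (B - A)) ` {a..b} \<subseteq> S"
    using seg_in_convex[OF assms(1,3,4)] assms(5,6) by auto
  ultimately have "continuous_on {a..b} (F \<circ> (\<lambda>s. A + s *\<^sub>R (B - A)))"
    using continuous_on_compose continuous_on_subset assms(2) by blast
  thus ?thesis by (intro continuous_intros) (simp add: o_def)
qed

lemma seg_sub:
  assumes "convex S" "continuous_on S F" "A \<in> S" "B \<in> S" "0 \<le> a" "a \<le> b" "b \<le> 1"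
  shows "seg_int F (A + a *\<^sub>R (B - A)) (A + b *\<^sub>R (B - A))
       = integral {a..b} (\<lambda>s. F (A + s *\<^sub>R (B - A)) \<bullet> (B - A))"
proof -
  let ?f = "\<lambda>s. F (A + s *\<^sub>R (B - A)) \<bullet> (B - A)"
  let ?g = "\<lambda>t. a + t * (b - a)"
  have "((\<lambda>t. (b - a) *\<^sub>R ?f (?g t)) has_integral (integral {?g 0..?g 1} ?f)) {0..1}"
  proof (rule has_integral_substitution[of 0 1 ?g a b])
    show "?g ` {0..1} \<subseteq> {a..b}"
    proof
      fix y assume "y \<in> ?g ` {0..1}"
      then obtain t where t: "0 \<le> t" "t \<le> 1" "y = ?g t" by auto
      have "t * (b - a) \<le> 1 * (b - a)" using t assms by (intro mult_right_mono) auto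
      thus "y \<in> {a..b}" using t assms by auto
    qed
    show "continuous_on {a..b} ?f" using seg_cont assms by blast
    show "\<And>x. x \<in> {0..1} \<Longrightarrow> (?g has_real_derivative (b - a)) (at x within {0..1})"
      by (auto intro!: derivative_eq_intros)
  qed (use assms in auto)
  moreover have "(\<lambda>t. (b - a) *\<^sub>R ?f (?g t)) =
     (\<lambda>t. F ((A + a *\<^sub>R (B - A)) + t *\<^sub>R ((A + b *\<^sub>R (B - A)) - (A + a *\<^sub>R (B - A))))
          \<bullet> ((A + b *\<^sub>R (B - A)) - (A + a *\<^sub>R (B - A))))"
  proof
    fix t
    have e1: "A + ?g t *\<^sub>R (B - A) = (A + a *\<^sub>R (B - A)) + t *\<^sub>R ((A + b *\<^sub>R (B - A)) - (A + a *\<^sub>R (B - A)))"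
      by (simp add: algebra_simps)
    have e2: "(A + b *\<^sub>R (B - A)) - (A + a *\<^sub>R (B - A)) = (b - a) *\<^sub>R (B - A)"
      by (simp add: algebra_simps)
    show "(b - a) *\<^sub>R ?f (?g t) = F ((A + a *\<^sub>R (B - A)) + t *\<^sub>R ((A + b *\<^sub>R (B - A)) - (A + a *\<^sub>R (B - A))))
          \<bullet> ((A + b *\<^sub>R (B - A)) - (A + a *\<^sub>R (B - A)))"
    proof -
      have "(b - a) *\<^sub>R ?f (?g t) = F (A + ?g t *\<^sub>R (B - A)) \<bullet> ((b - a) *\<^sub>R (B - A))"
        by simp
      also have "\<dots> = F ((A + a *\<^sub>R (B - A)) + t *\<^sub>R ((A + b *\<^sub>R (B - A)) - (A + a *\<^sub>R (B - A))))
          \<bullet> ((A + b *\<^sub>R (B - A)) - (A + a *\<^sub>R (B - A)))"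
        by (simp only: e1 e2)
      finally show ?thesis .
    qed
  qed
  ultimately have "((\<lambda>t. F ((A + a *\<^sub>R (B - A)) + t *\<^sub>R ((A + b *\<^sub>R (B - A)) - (A + a *\<^sub>R (B - A))))
          \<bullet> ((A + b *\<^sub>R (B - A)) - (A + a *\<^sub>R (B - A)))) has_integral (integral {?g 0..?g 1} ?f)) {0..1}"
    by (simp only:)
  moreover have "?g 0 = a" "?g 1 = b" by simp_all
  ultimately show ?thesis unfolding seg_int_def[of F "A + a *\<^sub>R (B - A)"] by (simp only: integral_unique)
qed

lemma seg_split:
  assumes "convex S" "continuous_on S F" "A \<in> S" "B \<in> S" "0 \<le> t" "t \<le> 1"
  shows "seg_int F A B = seg_int F A (A + t *\<^sub>R (B - A)) + seg_int F (A + t *\<^sub>R (B - A)) B"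
proof -
  let ?f = "\<lambda>s. F (A + s *\<^sub>R (B - A)) \<bullet> (B - A)"
  have 1: "seg_int F A B = integral {0..1} ?f" unfolding seg_int_def ..
  have 2: "seg_int F A (A + t *\<^sub>R (B - A)) = integral {0..t} ?f"
    using seg_sub[OF assms(1-4), of 0 t] assms by simp
  have 3: "seg_int F (A + t *\<^sub>R (B - A)) B = integral {t..1} ?f"
    using seg_sub[OF assms(1-4), of t 1] assms by simp
  have ii: "?f integrable_on {0..1}"
    using seg_cont[OF assms(1-4), of 0 1] integrable_continuous_real by auto
  have "integral {0..t} ?f + integral {t..1} ?f = integral {0..1} ?f"
    by (rule Henstock_Kurzweil_Integration.integral_combine) (use assms ii in auto)
  thus ?thesis using 1 2 3 by simp
qed

lemma seg_rev:
  assumes "convex S" "continuous_on S F" "A \<in> S" "B \<in> S"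
  shows "seg_int F B A = - seg_int F A B"
proof -
  let ?f = "\<lambda>s. F (A + s *\<^sub>R (B - A)) \<bullet> (B - A)"
  have "?f integrable_on {0..1}"
    using seg_cont[OF assms(1-4), of 0 1] integrable_continuous_real by auto
  hence i: "(?f has_integral seg_int F A B) {0..1}"
    unfolding seg_int_def by (rule integrable_integral)
  have "((\<lambda>x. ?f (-x)) has_integral seg_int F A B) {-1..-0}"
    by (rule iffD2[OF has_integral_reflect_real i])
  hence "((\<lambda>x. ?f (- (x + (-1)))) has_integral seg_int F A B) {-1 - (-1)..-0 - (-1)}"
    by (rule has_integral_shift_real_ivl)
  moreover have "{-1 - (-1)..-0 - (-1)} = {0..(1::real)}" by simp
  moreover have "\<And>x::real. - (x + (-1)) = 1 - x" by simp
  ultimately have "((\<lambda>x. ?f (1 - x)) has_integral seg_int F A B) {0..1}" by (simp only:)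
  hence "((\<lambda>x. - ?f (1 - x)) has_integral - seg_int F A B) {0..1}"
    by (rule has_integral_neg)
  moreover have "(\<lambda>x. - ?f (1 - x)) = (\<lambda>s. F (B + s *\<^sub>R (A - B)) \<bullet> (A - B))"
  proof
    fix x
    have e: "A + (1 - x) *\<^sub>R (B - A) = B + x *\<^sub>R (A - B)" by (simp add: algebra_simps)
    have "- ?f (1 - x) = F (A + (1 - x) *\<^sub>R (B - A)) \<bullet> (A - B)"
      by (simp only: inner_minus_right[symmetric] minus_diff_eq)
    thus "- ?f (1 - x) = F (B + x *\<^sub>R (A - B)) \<bullet> (A - B)"
      by (simp only: e)
  qed
  ultimately have "((\<lambda>s. F (B + s *\<^sub>R (A - B)) \<bullet> (A - B)) has_integral - seg_int F A B) {0..1}"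
    by (simp only:)
  thus ?thesis unfolding seg_int_def[of F B A] by (rule integral_unique)
qed

definition tri :: "('a::euclidean_space \<Rightarrow> 'a) \<Rightarrow> 'a \<Rightarrow> 'a \<Rightarrow> 'a \<Rightarrow> real" where
  "tri F A B C = seg_int F A B + seg_int F B C + seg_int F C A"

definition perim :: "'a::euclidean_space \<Rightarrow> 'a \<Rightarrow> 'a \<Rightarrow> real" where
  "perim A B C = norm (B - A) + norm (C - B) + norm (A - C)"

definition aff :: "'a::euclidean_space \<Rightarrow> ('a \<Rightarrow> 'a) \<Rightarrow> 'a \<Rightarrow> 'a \<Rightarrow> 'a \<Rightarrow> real" where
  "aff F0 J z P Q = (F0 + J (P - z)) \<bullet> (Q - P) + (1/2) * (J (Q - P) \<bullet> (Q - P))"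

lemma aff_alt:
  assumes "linear J" "\<forall>u v. J u \<bullet> v = u \<bullet> J v"
  shows "aff F0 J z P Q = F0 \<bullet> (Q - P) + (1/2) * (J (Q - z) \<bullet> (Q - z)) - (1/2) * (J (P - z) \<bullet> (P - z))"
proof -
  define a where "a = P - z"
  define b where "b = Q - z"
  have QP: "Q - P = b - a" unfolding a_def b_def by simp
  have Jd: "J (b - a) = J b - J a" using assms(1) by (simp add: linear_diff)
  have sy: "J b \<bullet> a = J a \<bullet> b" using assms(2) by (simp add: inner_commute)
  have "aff F0 J z P Q = (F0 + J a) \<bullet> (b - a) + (1/2) * (J (b - a) \<bullet> (b - a))"
    unfolding aff_def QP a_def ..
  also have "\<dots> = F0 \<bullet> (b - a) + (1/2) * (J b \<bullet> b) - (1/2) * (J a \<bullet> a)"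
    unfolding Jd by (simp add: inner_diff_left inner_diff_right inner_add_left sy algebra_simps)
  finally show ?thesis unfolding QP a_def b_def .
qed

lemma aff_cycle:
  assumes "linear J" "\<forall>u v. J u \<bullet> v = u \<bullet> J v"
  shows "aff F0 J z A B + aff F0 J z B C + aff F0 J z C A = 0"
  unfolding aff_alt[OF assms]
  by (simp add: inner_diff_right algebra_simps)

lemma affine_int:
  fixes \<alpha> \<beta> :: real
  shows "((\<lambda>s. \<alpha> + s * \<beta>) has_integral (\<alpha> + \<beta> / 2)) {0..1}"
proof -
  have "((\<lambda>s. \<alpha> + s * \<beta>) has_integral ((\<lambda>s. \<alpha> * s + \<beta> * s^2 / 2) 1 - (\<lambda>s. \<alpha> * s + \<beta> * s^2 / 2) 0)) {0..1}"
    by (rule fundamental_theorem_of_calculus)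
       (auto intro!: derivative_eq_intros simp: has_real_derivative_iff_has_vector_derivative[symmetric])
  thus ?thesis by simp
qed

lemma seg_est:
  assumes "convex S" "continuous_on S F" "A \<in> S" "B \<in> S" "bounded_linear J" "0 \<le> e"
    and bnd: "\<forall>s\<in>{0..1}. norm (F (A + s *\<^sub>R (B - A)) - (F0 + J (A + s *\<^sub>R (B - A) - z))) \<le> e"
  shows "\<bar>seg_int F A B - aff F0 J z A B\<bar> \<le> e * norm (B - A)"
proof -
  interpret J: bounded_linear J by fact
  let ?g = "\<lambda>s. F (A + s *\<^sub>R (B - A)) \<bullet> (B - A)"
  let ?h = "\<lambda>s. (F0 + J (A - z)) \<bullet> (B - A) + s * (J (B - A) \<bullet> (B - A))"
  have "?g integrable_on {0..1}"
    using seg_cont[OF assms(1-4), of 0 1] integrable_continuous_real by auto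
  hence gi: "(?g has_integral seg_int F A B) {0..1}"
    unfolding seg_int_def by (rule integrable_integral)
  have hi: "(?h has_integral aff F0 J z A B) {0..1}"
    using affine_int[of "(F0 + J (A - z)) \<bullet> (B - A)" "J (B - A) \<bullet> (B - A)"]
    unfolding aff_def by simp
  have di: "((\<lambda>s. ?g s - ?h s) has_integral (seg_int F A B - aff F0 J z A B)) {0..1}"
    by (rule has_integral_diff[OF gi hi])
  have bnd2: "norm (?g s - ?h s) \<le> e * norm (B - A)" if s: "s \<in> {0..1} - {}" for s
  proof -
    have "J (A + s *\<^sub>R (B - A) - z) = J (A - z) + s *\<^sub>R J (B - A)"
      by (simp add: J.diff J.add J.scaleR algebra_simps)
    hence "?g s - ?h s = (F (A + s *\<^sub>R (B - A)) - (F0 + J (A + s *\<^sub>R (B - A) - z))) \<bullet> (B - A)"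
      by (simp add: inner_diff_left inner_add_left algebra_simps)
    hence "norm (?g s - ?h s) \<le> norm (F (A + s *\<^sub>R (B - A)) - (F0 + J (A + s *\<^sub>R (B - A) - z))) * norm (B - A)"
      by (simp add: Cauchy_Schwarz_ineq2)
    also have "\<dots> \<le> e * norm (B - A)"
      using bnd s by (intro mult_right_mono) auto
    finally show ?thesis .
  qed
  have "0 \<le> e * norm (B - A)" using assms by simp
  from has_integral_bound_real[OF this finite.emptyI di bnd2]
  have "norm (seg_int F A B - aff F0 J z A B) \<le> e * norm (B - A) * 1" by simp
  thus ?thesis by simp
qed

lemma tri_est:
  assumes "convex S" "continuous_on S F" "A \<in> S" "B \<in> S" "C \<in> S" "bounded_linear J"
    "\<forall>u v. J u \<bullet> v = u \<bullet> J v" "0 \<le> e"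
    and bnd: "\<forall>P\<in>{A,B,C}. \<forall>Q\<in>{A,B,C}. \<forall>s\<in>{0..1}.
       norm (F (P + s *\<^sub>R (Q - P)) - (Fz + J (P + s *\<^sub>R (Q - P) - z))) \<le> e"
  shows "\<bar>tri F A B C\<bar> \<le> e * perim A B C"
proof -
  have lin: "linear J" using assms(6) bounded_linear.linear by blast
  have e1: "\<bar>seg_int F A B - aff Fz J z A B\<bar> \<le> e * norm (B - A)"
    using bnd by (intro seg_est[OF assms(1,2,3,4,6,8)]) auto
  have e2: "\<bar>seg_int F B C - aff Fz J z B C\<bar> \<le> e * norm (C - B)"
    using bnd by (intro seg_est[OF assms(1,2,4,5,6,8)]) auto
  have e3: "\<bar>seg_int F C A - aff Fz J z C A\<bar> \<le> e * norm (A - C)"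
    using bnd by (intro seg_est[OF assms(1,2,5,3,6,8)]) auto
  have "tri F A B C = (seg_int F A B - aff Fz J z A B) + (seg_int F B C - aff Fz J z B C)
     + (seg_int F C A - aff Fz J z C A)"
    using aff_cycle[OF lin assms(7), of Fz z A B C] unfolding tri_def by linarith
  thus ?thesis using e1 e2 e3 unfolding perim_def by (simp add: algebra_simps)
qed

definition good :: "'a::euclidean_space set \<Rightarrow> ('a \<Rightarrow> 'a) \<Rightarrow> 'a \<Rightarrow> 'a \<Rightarrow> 'a \<Rightarrow> 'a \<Rightarrow> 'a \<Rightarrow> 'a \<Rightarrow> bool" where
  "good S F A B C A' B' C' \<longleftrightarrow> A' \<in> S \<and> B' \<in> S \<and> C' \<in> S \<and>
     \<bar>tri F A B C\<bar> \<le> 4 * \<bar>tri F A' B' C'\<bar> \<and> perim A' B' C' = perim A B C / 2 \<and>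
     norm (A' - A) \<le> perim A B C"

lemma half_vec: "norm ((1/2::real) *\<^sub>R (v::'a::real_normed_vector)) = norm v / 2"
  by simp

lemma half_half: "(1/2::real) *\<^sub>R X + (1/2) *\<^sub>R X = (X::'a::real_vector)"
  by (simp add: scaleR_left_distrib[symmetric])

lemma subdiv_exists:
  assumes "convex S" "continuous_on S F" "A \<in> S" "B \<in> S" "C \<in> S"
  shows "\<exists>A' B' C'. good S F A B C A' B' C'"
proof -
  define mab where "mab = A + (1/2) *\<^sub>R (B - A)"
  define mbc where "mbc = B + (1/2) *\<^sub>R (C - B)"
  define mca where "mca = C + (1/2) *\<^sub>R (A - C)"
  have mS: "mab \<in> S" "mbc \<in> S" "mca \<in> S"
    unfolding mab_def mbc_def mca_def using assms by (auto intro!: seg_in_convex[of S])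
  have sAB: "seg_int F A B = seg_int F A mab + seg_int F mab B"
    unfolding mab_def using seg_split[OF assms(1,2,3,4), of "1/2"] by simp
  have sBC: "seg_int F B C = seg_int F B mbc + seg_int F mbc C"
    unfolding mbc_def using seg_split[OF assms(1,2,4,5), of "1/2"] by simp
  have sCA: "seg_int F C A = seg_int F C mca + seg_int F mca A"
    unfolding mca_def using seg_split[OF assms(1,2,5,3), of "1/2"] by simp
  have r1: "seg_int F mca mab = - seg_int F mab mca" using seg_rev[OF assms(1,2) mS(1) mS(3)] .
  have r2: "seg_int F mab mbc = - seg_int F mbc mab" using seg_rev[OF assms(1,2) mS(2) mS(1)] .
  have r3: "seg_int F mbc mca = - seg_int F mca mbc" using seg_rev[OF assms(1,2) mS(3) mS(2)] .
  have decomp: "tri F A B C = tri F A mab mca + tri F mab B mbc + tri F mca mbc C + tri F mab mbc mca"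
    unfolding tri_def sAB sBC sCA r1 r2 r3 by simp
  have v1: "mab - A = (1/2) *\<^sub>R (B - A)" "mca - mab = (1/2) *\<^sub>R (C - B)" "A - mca = (1/2) *\<^sub>R (A - C)"
    "B - mab = (1/2) *\<^sub>R (B - A)" "mbc - B = (1/2) *\<^sub>R (C - B)" "mab - mbc = (1/2) *\<^sub>R (A - C)"
    "mbc - mca = (1/2) *\<^sub>R (B - A)" "C - mbc = (1/2) *\<^sub>R (C - B)" "mca - C = (1/2) *\<^sub>R (A - C)"
    "mbc - mab = - ((1/2) *\<^sub>R (A - C))" "mca - mbc = - ((1/2) *\<^sub>R (B - A))" "mab - mca = - ((1/2) *\<^sub>R (C - B))"
    unfolding mab_def mbc_def mca_def by (simp_all add: algebra_simps half_half)
  have p: "perim A mab mca = perim A B C / 2" "perim mab B mbc = perim A B C / 2"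
     "perim mca mbc C = perim A B C / 2" "perim mab mbc mca = perim A B C / 2"
    unfolding perim_def v1 norm_minus_cancel half_vec by simp_all
  have pA: "norm (B - A) \<le> perim A B C" "norm (C - A) \<le> perim A B C"
    unfolding perim_def by (simp_all add: norm_minus_commute)
  have d: "norm (A - A) \<le> perim A B C" "norm (mab - A) \<le> perim A B C" "norm (mca - A) \<le> perim A B C"
  proof -
    show "norm (A - A) \<le> perim A B C" unfolding perim_def by simp
    show "norm (mab - A) \<le> perim A B C" unfolding v1 half_vec using pA norm_ge_zero[of "B - A"] by linarith
    have "mca - A = (1/2) *\<^sub>R (C - A)" unfolding mca_def by (simp add: algebra_simps half_half)
    hence "norm (mca - A) = norm (C - A) / 2" by simp
    thus "norm (mca - A) \<le> perim A B C" using pA norm_ge_zero[of "C - A"] by linarith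
  qed
  have "\<bar>tri F A B C\<bar> \<le> 4 * \<bar>tri F A mab mca\<bar> \<or> \<bar>tri F A B C\<bar> \<le> 4 * \<bar>tri F mab B mbc\<bar> \<or>
        \<bar>tri F A B C\<bar> \<le> 4 * \<bar>tri F mca mbc C\<bar> \<or> \<bar>tri F A B C\<bar> \<le> 4 * \<bar>tri F mab mbc mca\<bar>"
    using decomp by linarith
  thus ?thesis
    using mS assms p d unfolding good_def by blast
qed

lemma exists_small_pow:
  fixes p e :: real
  assumes "0 < e" "0 \<le> p"
  shows "\<exists>N. p / 2^N < e"
proof -
  obtain N where N: "(1/2::real)^N < e / (p + 1)"
    using real_arch_pow_inv[of "e / (p + 1)" "1/2"] assms by auto
  have "p / 2^N = p * (1/2)^N" by (simp add: power_one_over)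
  also have "\<dots> \<le> (p + 1) * (1/2)^N" by (intro mult_right_mono) auto
  also have "\<dots> < (p + 1) * (e / (p + 1))" using N assms by (intro mult_strict_left_mono) auto
  also have "\<dots> = e" using assms by simp
  finally show ?thesis by blast
qed

lemma edge_near:
  assumes "P \<in> {A,B,C}" "Q \<in> {A,B,C}" "0 \<le> s" "s \<le> 1"
  shows "norm (P + s *\<^sub>R (Q - P) - A) \<le> 2 * perim A B C"
proof -
  have n: "norm (X - Y) \<le> perim A B C" if "X \<in> {A,B,C}" "Y \<in> {A,B,C}" for X Y
    using that unfolding perim_def by (auto simp: norm_minus_commute)
  have "norm (P + s *\<^sub>R (Q - P) - A) \<le> norm (P - A) + norm (s *\<^sub>R (Q - P))"
    by (metis add.commute add_diff_eq norm_triangle_ineq)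
  also have "norm (s *\<^sub>R (Q - P)) = s * norm (Q - P)" using assms by simp
  also have "\<dots> \<le> 1 * norm (Q - P)" using assms by (intro mult_right_mono) auto
  finally show ?thesis using n[OF assms(1)] n[OF assms(2,1)] by (smt (verit) insertI1)
qed

lemma goursat:
  fixes F :: "'a::euclidean_space \<Rightarrow> 'a"
  assumes cvx: "convex S" and cl: "closed S" and cont: "continuous_on S F"
    and der: "\<forall>x\<in>S. \<exists>J. (F has_derivative J) (at x within S) \<and> (\<forall>u v. J u \<bullet> v = u \<bullet> J v)"
    and ABC: "A \<in> S" "B \<in> S" "C \<in> S"
  shows "tri F A B C = 0"
proof (rule ccontr)
  assume nz: "tri F A B C \<noteq> 0"
  define \<tau> where "\<tau> = \<bar>tri F A B C\<bar>"
  have tpos: "\<tau> > 0" using nz unfolding \<tau>_def by simp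
  define p0 where "p0 = perim A B C"
  have p0nn: "0 \<le> p0" unfolding p0_def perim_def by simp
  define nx :: "'a \<times> 'a \<times> 'a \<Rightarrow> 'a \<times> 'a \<times> 'a" where
    "nx = (\<lambda>t. SOME t'. good S F (fst t) (fst (snd t)) (snd (snd t)) (fst t') (fst (snd t')) (snd (snd t')))"
  define sq where "sq = (\<lambda>k. (nx ^^ k) (A, B, C))"
  define a where "a = (\<lambda>k. fst (sq k))"
  define b where "b = (\<lambda>k. fst (snd (sq k)))"
  define c where "c = (\<lambda>k. snd (snd (sq k)))"
  have step: "good S F (a k) (b k) (c k) (a (Suc k)) (b (Suc k)) (c (Suc k))"
    if abc: "a k \<in> S" "b k \<in> S" "c k \<in> S" for k
  proof -
    obtain A' B' C' where g: "good S F (a k) (b k) (c k) A' B' C'"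
      using subdiv_exists[OF cvx cont abc] by blast
    hence "\<exists>t'. good S F (fst (sq k)) (fst (snd (sq k))) (snd (snd (sq k))) (fst t') (fst (snd t')) (snd (snd t'))"
      unfolding a_def b_def c_def by (intro exI[of _ "(A', B', C')"]) simp
    hence "good S F (fst (sq k)) (fst (snd (sq k))) (snd (snd (sq k))) (fst (nx (sq k))) (fst (snd (nx (sq k)))) (snd (snd (nx (sq k))))"
      unfolding nx_def by (rule someI_ex)
    moreover have "sq (Suc k) = nx (sq k)" unfolding sq_def by simp
    ultimately show ?thesis unfolding a_def b_def c_def by simp
  qed
  have inv: "a k \<in> S \<and> b k \<in> S \<and> c k \<in> S \<and> perim (a k) (b k) (c k) = p0 / 2^k
      \<and> \<tau> \<le> 4^k * \<bar>tri F (a k) (b k) (c k)\<bar>" for k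
  proof (induction k)
    case 0
    have "sq 0 = (A, B, C)" unfolding sq_def by simp
    thus ?case using ABC unfolding a_def b_def c_def p0_def \<tau>_def by simp
  next
    case (Suc k)
    hence g: "good S F (a k) (b k) (c k) (a (Suc k)) (b (Suc k)) (c (Suc k))"
      using step by blast
    have "\<tau> \<le> 4^k * \<bar>tri F (a k) (b k) (c k)\<bar>" using Suc by blast
    also have "\<dots> \<le> 4^k * (4 * \<bar>tri F (a (Suc k)) (b (Suc k)) (c (Suc k))\<bar>)"
      using g unfolding good_def by (intro mult_left_mono) auto
    finally have "\<tau> \<le> 4 ^ Suc k * \<bar>tri F (a (Suc k)) (b (Suc k)) (c (Suc k))\<bar>" by simp
    thus ?case using g Suc unfolding good_def by simp
  qed
  have mv: "norm (a (Suc k) - a k) \<le> p0 / 2^k" for k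
    using step[of k] inv[of k] unfolding good_def by simp
  have tele: "norm (a (k + n) - a k) \<le> 2 * p0 / 2^k - 2 * p0 / 2^(k+n)" for k n
  proof (induction n)
    case 0 thus ?case by simp
  next
    case (Suc n)
    have "norm (a (k + Suc n) - a k) \<le> norm (a (Suc (k + n)) - a (k + n)) + norm (a (k + n) - a k)"
    proof -
      have "a (k + Suc n) - a k = (a (Suc (k + n)) - a (k + n)) + (a (k + n) - a k)" by simp
      thus ?thesis by (metis norm_triangle_ineq)
    qed
    also have "\<dots> \<le> p0 / 2^(k+n) + (2 * p0 / 2^k - 2 * p0 / 2^(k+n))"
      using mv[of "k+n"] Suc by linarith
    also have "\<dots> = 2 * p0 / 2^k - 2 * p0 / 2^(k + Suc n)" by (simp add: field_simps)
    finally show ?case .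
  qed
  have tele2: "norm (a n - a k) \<le> 2 * p0 / 2^k" if kn: "k \<le> n" for k n
  proof -
    obtain m where n: "n = k + m" using le_Suc_ex[OF kn] by blast
    have "0 \<le> 2 * p0 / 2^(k+m)" using p0nn by simp
    thus ?thesis using tele[of k m] unfolding n by linarith
  qed
  have "Cauchy a"
  proof (rule metric_CauchyI)
    fix e :: real assume "0 < e"
    then obtain N where N: "4 * p0 / 2^N < e" using exists_small_pow[of e "4 * p0"] p0nn by auto
    have "\<forall>m\<ge>N. \<forall>n\<ge>N. dist (a m) (a n) < e"
    proof (intro allI impI)
      fix m n assume "N \<le> m" "N \<le> n"
      have "dist (a m) (a n) \<le> norm (a m - a N) + norm (a n - a N)"
      proof -
        have "a m - a n = (a m - a N) - (a n - a N)" by simp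
        thus ?thesis unfolding dist_norm by (metis norm_triangle_ineq4)
      qed
      also have "\<dots> \<le> 2 * p0 / 2^N + 2 * p0 / 2^N"
        using tele2 \<open>N \<le> m\<close> \<open>N \<le> n\<close> by (intro add_mono) auto
      finally show "dist (a m) (a n) < e" using N by simp
    qed
    thus "\<exists>M. \<forall>m\<ge>M. \<forall>n\<ge>M. dist (a m) (a n) < e" by blast
  qed
  then obtain z where lim: "a \<longlonglongrightarrow> z"
    using Cauchy_convergent_iff convergent_def by blast
  have zS: "z \<in> S" using closed_sequentially[OF cl _ lim] inv by blast
  have dz: "norm (a k - z) \<le> 2 * p0 / 2^k" for k
  proof -
    have "(\<lambda>n. norm (a n - a k)) \<longlonglongrightarrow> norm (z - a k)" by (intro tendsto_intros lim)
    moreover have "\<exists>N. \<forall>n\<ge>N. norm (a n - a k) \<le> 2 * p0 / 2^k" using tele2 by blast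
    ultimately have "norm (z - a k) \<le> 2 * p0 / 2^k" by (rule LIMSEQ_le_const2)
    thus ?thesis by (simp add: norm_minus_commute)
  qed
  obtain J where J: "(F has_derivative J) (at z within S)" and sym: "\<forall>u v. J u \<bullet> v = u \<bullet> J v"
    using der zS by blast
  have bl: "bounded_linear J" using J has_derivative_within_alt by blast
  define e where "e = \<tau> / (8 * (p0^2 + 1))"
  have "0 < 8 * (p0^2 + 1)" by (intro mult_pos_pos add_nonneg_pos) auto
  hence epos: "e > 0" unfolding e_def using tpos by (intro divide_pos_pos)
  obtain d where dpos: "d > 0" and dd: "\<forall>y\<in>S. norm (y - z) < d \<longrightarrow> norm (F y - F z - J (y - z)) \<le> e * norm (y - z)"
    using J epos unfolding has_derivative_within_alt by blast
  obtain k where k: "4 * p0 / 2^k < d" using exists_small_pow[of d "4 * p0"] dpos p0nn by auto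
  define r where "r = 4 * p0 / 2^k"
  have rnn: "0 \<le> e * r" unfolding r_def using epos p0nn by simp
  have ed: "norm (F (P + s *\<^sub>R (Q - P)) - (F z + J (P + s *\<^sub>R (Q - P) - z))) \<le> e * r"
    if "P \<in> {a k, b k, c k}" "Q \<in> {a k, b k, c k}" "s \<in> {0..1}" for P Q s
  proof -
    define x where "x = P + s *\<^sub>R (Q - P)"
    have PQS: "P \<in> S" "Q \<in> S" using that inv[of k] by auto
    have xS: "x \<in> S" unfolding x_def using seg_in_convex[OF cvx PQS] that by auto
    have "norm (x - z) \<le> norm (x - a k) + norm (a k - z)" by (rule norm_diff_triangle_le[of _ "a k"]) simp_all
    also have "\<dots> \<le> 2 * (p0 / 2^k) + 2 * p0 / 2^k"
      unfolding x_def using edge_near[of P "a k" "b k" "c k" Q s] that dz[of k] inv[of k] by (intro add_mono) auto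
    also have "\<dots> = r" unfolding r_def by simp
    finally have xr: "norm (x - z) \<le> r" .
    hence "norm (x - z) < d" using k unfolding r_def by simp
    hence "norm (F x - F z - J (x - z)) \<le> e * norm (x - z)" using dd xS by blast
    also have "\<dots> \<le> e * r" using xr epos by (intro mult_left_mono) auto
    finally show ?thesis unfolding x_def by (simp add: diff_diff_eq)
  qed
  have "\<bar>tri F (a k) (b k) (c k)\<bar> \<le> (e * r) * perim (a k) (b k) (c k)"
    by (rule tri_est[OF cvx cont _ _ _ bl sym rnn, where Fz="F z" and z=z]) (use inv[of k] ed in auto)
  also have "\<dots> = 4 * e * p0^2 / 4^k"
  proof -
    have pk: "perim (a k) (b k) (c k) = p0 / 2^k" using inv[of k] by blast
    have f4: "(4::real)^k = 2^k * 2^k" by (simp add: power_mult_distrib[symmetric])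
    show ?thesis unfolding pk r_def f4 by (simp add: power2_eq_square)
  qed
  finally have "4^k * \<bar>tri F (a k) (b k) (c k)\<bar> \<le> 4 * e * p0^2"
    by (simp add: field_simps)
  hence "\<tau> \<le> 4 * e * p0^2" using inv[of k] by linarith
  also have "\<dots> = \<tau> * (p0^2 / (2 * (p0^2 + 1)))"
  proof -
    have "p0^2 + 1 \<noteq> 0" by (metis add_nonneg_pos zero_le_power2 zero_less_one less_irrefl)
    thus ?thesis unfolding e_def by (simp add: field_simps)
  qed
  also have "\<dots> < \<tau> * 1"
    using tpos by (intro mult_strict_left_mono) (auto simp: field_simps add_pos_nonneg)
  finally show False by simp
qed

lemma orth_convex: "convex (nonneg_orthant :: (real^'l::finite) set)"
  unfolding nonneg_orthant_def convex_def by (auto intro!: add_nonneg_nonneg)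

lemma orth_closed: "closed (nonneg_orthant :: (real^'l::finite) set)"
proof -
  have "nonneg_orthant = (\<Inter>l. {X::real^'l. 0 \<le> X $ l})" unfolding nonneg_orthant_def by auto
  moreover have c: "closed {X::real^'l. 0 \<le> X $ l}" for l
    using closed_halfspace_component_ge_cart[where i=l and a=0] by simp
  have "closed (\<Inter>l. {X::real^'l. 0 \<le> X $ l})" by (intro closed_INT ballI c)
  ultimately show ?thesis by simp
qed

lemma orth_zero: "0 \<in> nonneg_orthant" unfolding nonneg_orthant_def by simp

locale costmap =
  fixes cm :: "real^'l::finite \<Rightarrow> real^'l"
  assumes cont: "continuous_on nonneg_orthant cm"
    and rng: "cm ` nonneg_orthant \<subseteq> nonneg_orthant"
    and symj: "\<forall>X\<in>nonneg_orthant. \<exists>J.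
           (cm has_derivative J) (at X within nonneg_orthant) \<and> (\<forall>u v. J u \<bullet> v = u \<bullet> J v)"
    and smono: "\<forall>X\<in>nonneg_orthant. \<forall>Y\<in>nonneg_orthant.
           X \<noteq> Y \<longrightarrow> 0 < (cm X - cm Y) \<bullet> (X - Y)"
begin

abbreviation "Ort \<equiv> (nonneg_orthant :: (real^'l) set)"

lemma wmono: "X \<in> Ort \<Longrightarrow> Y \<in> Ort \<Longrightarrow> 0 \<le> (cm X - cm Y) \<bullet> (X - Y)"
  using smono by (cases "X = Y") (auto intro: less_imp_le)

lemma inj: "inj_on cm Ort"
proof
  fix X Y assume "X \<in> Ort" "Y \<in> Ort" "cm X = cm Y"
  thus "X = Y" using smono by force
qed

lemma cpot_seg0: "Cpot cm X = seg_int cm 0 X"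
  unfolding Cpot_def seg_int_def by simp

lemma cpot_diff:
  assumes "X \<in> Ort" "Y \<in> Ort"
  shows "Cpot cm Y - Cpot cm X = seg_int cm X Y"
proof -
  have "tri cm 0 X Y = 0"
    by (rule goursat[OF orth_convex orth_closed cont symj orth_zero assms])
  moreover have "seg_int cm Y 0 = - seg_int cm 0 Y"
    by (rule seg_rev[OF orth_convex cont orth_zero assms(2)])
  ultimately show ?thesis unfolding tri_def cpot_seg0 by simp
qed

lemma cpot_grad:
  assumes "X \<in> Ort" "Y \<in> Ort"
  shows "Cpot cm X + cm X \<bullet> (Y - X) \<le> Cpot cm Y"
proof -
  let ?g = "\<lambda>s. cm (X + s *\<^sub>R (Y - X)) \<bullet> (Y - X)"
  have gi: "?g integrable_on {0..1}"
    using seg_cont[OF orth_convex cont assms, of 0 1] integrable_continuous_real by auto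
  have ge: "cm X \<bullet> (Y - X) \<le> ?g s" if "s \<in> {0..1}" for s
  proof (cases "s = 0")
    case True thus ?thesis by simp
  next
    case False
    hence sp: "s > 0" using that by auto
    have "X + s *\<^sub>R (Y - X) \<in> Ort" using seg_in_convex[OF orth_convex assms] that by auto
    hence "0 \<le> (cm (X + s *\<^sub>R (Y - X)) - cm X) \<bullet> ((X + s *\<^sub>R (Y - X)) - X)"
      using wmono assms by blast
    hence "0 \<le> s * ((cm (X + s *\<^sub>R (Y - X)) - cm X) \<bullet> (Y - X))" by simp
    hence "0 \<le> (cm (X + s *\<^sub>R (Y - X)) - cm X) \<bullet> (Y - X)"
      using sp by (simp add: zero_le_mult_iff)
    thus ?thesis by (simp add: inner_diff_left)
  qed
  have "integral {0..1} (\<lambda>s::real. cm X \<bullet> (Y - X)) \<le> integral {0..1} ?g"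
  proof -
    have ci: "(\<lambda>s::real. cm X \<bullet> (Y - X)) integrable_on {0..1}"
      by (rule integrable_continuous_real) (rule continuous_on_const)
    show ?thesis using Henstock_Kurzweil_Integration.integral_le[OF ci gi] ge by blast
  qed
  hence "cm X \<bullet> (Y - X) \<le> seg_int cm X Y" unfolding seg_int_def by simp
  thus ?thesis using cpot_diff[OF assms] by simp
qed

lemma cstar_bdd:
  assumes "X \<in> Ort"
  shows "bdd_above ((\<lambda>Y. cm X \<bullet> Y - Cpot cm Y) ` Ort)"
    and "Cstar cm (cm X) = cm X \<bullet> X - Cpot cm X"
proof -
  have le: "cm X \<bullet> Y - Cpot cm Y \<le> cm X \<bullet> X - Cpot cm X" if "Y \<in> Ort" for Y
    using cpot_grad[OF assms that] by (simp add: inner_diff_right)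
  thus "bdd_above ((\<lambda>Y. cm X \<bullet> Y - Cpot cm Y) ` Ort)" by (rule bdd_aboveI2)
  show "Cstar cm (cm X) = cm X \<bullet> X - Cpot cm X"
    unfolding Cstar_def by (rule cSup_eq_maximum) (use assms le in auto)
qed

lemma cinv_eq: "X \<in> Ort \<Longrightarrow> cinv cm (cm X) = X"
  unfolding cinv_def by (rule the_inv_into_f_f[OF inj])

lemma cinv_in: "c \<in> cm ` Ort \<Longrightarrow> cinv cm c \<in> Ort"
  using cinv_eq by auto

lemma cm_cinv: "c \<in> cm ` Ort \<Longrightarrow> cm (cinv cm c) = c"
  using cinv_eq by auto

lemma cstar_at: "c \<in> cm ` Ort \<Longrightarrow> Cstar cm c = c \<bullet> cinv cm c - Cpot cm (cinv cm c)"
  using cstar_bdd(2) cinv_eq by auto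

lemma cstar_sub:
  assumes "c \<in> cm ` Ort" "c' \<in> cm ` Ort"
  shows "Cstar cm c + (c' - c) \<bullet> cinv cm c \<le> Cstar cm c'"
proof -
  obtain X' where X': "X' \<in> Ort" "c' = cm X'" using assms by auto
  have "c' \<bullet> cinv cm c - Cpot cm (cinv cm c) \<le> Cstar cm c'"
    unfolding Cstar_def using cstar_bdd(1)[OF X'(1)] cinv_in[OF assms(1)] X'(2)
    by (intro cSUP_upper) auto
  thus ?thesis using cstar_at[OF assms(1)] by (simp add: inner_diff_left)
qed

end

locale ngev =
  fixes src tgt :: "'l::finite \<Rightarrow> 'n::finite" and alpha :: "'l \<Rightarrow> real"
    and theta :: "'n \<Rightarrow> real" and d :: 'n and q :: "'n \<Rightarrow> real" and R :: "(real^'l) set"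
  assumes theta_pos: "\<And>i. 0 < theta i" and alpha_nn: "\<And>l. 0 \<le> alpha l"
    and q_nn: "\<And>i. 0 \<le> q i"
    and mu_wp: "\<And>c. c \<in> R \<Longrightarrow> \<exists>!mu. mu_eqs src tgt alpha theta d c mu"
    and flow_wp: "\<And>t. t \<in> R \<Longrightarrow> \<exists>!x. flow_eqs src tgt
                  (ngev_prob src tgt alpha theta (mu_of src tgt alpha theta d t) t) d q x"
begin

abbreviation "mu \<equiv> mu_of src tgt alpha theta d"

definition SS :: "real^'l \<Rightarrow> ('n \<Rightarrow> real) \<Rightarrow> 'n \<Rightarrow> real" where
  "SS c w i = (\<Sum>l\<in>{l. src l = i}. alpha l * exp (- theta i * (c $ l + w (tgt l))))"

definition Tm :: "real^'l \<Rightarrow> ('n \<Rightarrow> real) \<Rightarrow> 'n \<Rightarrow> real" where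
  "Tm c w i = (if i = d then 0 else - ln (SS c w i) / theta i)"

definition EE :: "real^'l \<Rightarrow> ('n \<Rightarrow> real) \<Rightarrow> 'n \<Rightarrow> real" where
  "EE c w i = (\<Sum>l\<in>{l. src l = i}. alpha l * exp (- theta i * (c $ l + w (tgt l) - w i)))"

lemma mu_ok: "c \<in> R \<Longrightarrow> mu_eqs src tgt alpha theta d c (mu c)"
  unfolding mu_of_def by (rule theI'[OF mu_wp])

lemma mu_uniq: "c \<in> R \<Longrightarrow> mu_eqs src tgt alpha theta d c w \<Longrightarrow> w = mu c"
  using mu_ok mu_wp by blast

lemma mu_d: "c \<in> R \<Longrightarrow> mu c d = 0"
  using mu_ok unfolding mu_eqs_def by blast

lemma mu_eq1: "c \<in> R \<Longrightarrow> i \<noteq> d \<Longrightarrow> EE c (mu c) i = 1"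
  using mu_ok unfolding mu_eqs_def EE_def by blast

lemma pos_link:
  assumes "c \<in> R" "i \<noteq> d"
  shows "\<exists>l. src l = i \<and> 0 < alpha l"
proof (rule ccontr)
  assume na: "\<not> ?thesis"
  have "\<forall>l. src l = i \<longrightarrow> alpha l = 0"
  proof (intro allI impI)
    fix l assume "src l = i"
    hence "\<not> 0 < alpha l" using na by blast
    thus "alpha l = 0" using alpha_nn[of l] by linarith
  qed
  hence "EE c (mu c) i = 0" unfolding EE_def by simp
  thus False using mu_eq1[OF assms] by simp
qed

lemma SS_pos:
  assumes "c \<in> R" "i \<noteq> d"
  shows "0 < SS c' w i"
proof -
  obtain l where l: "src l = i" "0 < alpha l" using pos_link[OF assms] by blast
  show ?thesis unfolding SS_def
    by (rule sum_pos2[of _ l]) (use l alpha_nn in auto)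
qed

lemma EE_SS: "EE c w i = exp (theta i * w i) * SS c w i"
proof -
  have e: "alpha l * exp (- theta i * (c $ l + w (tgt l) - w i)) =
        exp (theta i * w i) * (alpha l * exp (- theta i * (c $ l + w (tgt l))))" for l
  proof -
    have ee: "exp (- theta i * (c $ l + w (tgt l) - w i)) = exp (theta i * w i) * exp (- theta i * (c $ l + w (tgt l)))"
      unfolding exp_add[symmetric] by (simp add: algebra_simps)
    show ?thesis unfolding ee by (rule mult.left_commute)
  qed
  show ?thesis unfolding EE_def SS_def sum_distrib_left by (rule sum.cong[OF refl]) (rule e)
qed

lemma fixed_imp_eqs:
  assumes "c \<in> R" "w d = 0" "\<And>i. i \<noteq> d \<Longrightarrow> w i = Tm c w i"
  shows "mu_eqs src tgt alpha theta d c w"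
  unfolding mu_eqs_def
proof (intro conjI allI impI)
  show "w d = 0" by fact
  fix i assume i: "i \<noteq> d"
  have Sp: "0 < SS c w i" using SS_pos[OF assms(1) i] .
  have "theta i * w i = - ln (SS c w i)"
    using assms(3)[OF i] theta_pos[of i] unfolding Tm_def using i by (simp add: field_simps)
  hence "exp (theta i * w i) * SS c w i = 1" using Sp by (simp add: exp_minus field_simps)
  hence "EE c w i = 1" using EE_SS by simp
  thus "(\<Sum>l\<in>{l. src l = i}. alpha l * exp (- theta i * (c $ l + w (tgt l) - w i))) = 1"
    unfolding EE_def .
qed

lemma sub_le_T:
  assumes "c \<in> R" "i \<noteq> d" "EE c w i \<le> 1"
  shows "w i \<le> Tm c w i"
proof -
  have Sp: "0 < SS c w i" using SS_pos[OF assms(1,2)] .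
  have "ln (exp (theta i * w i) * SS c w i) \<le> ln 1"
    using assms(3) EE_SS Sp by (subst ln_le_cancel_iff) auto
  hence "theta i * w i + ln (SS c w i) \<le> 0" using Sp by (simp add: ln_mult)
  hence "w i \<le> - ln (SS c w i) / theta i" using theta_pos[of i] by (simp add: field_simps)
  thus ?thesis unfolding Tm_def using assms(2) by simp
qed

lemma T_mu: "c \<in> R \<Longrightarrow> Tm c (mu c) i = mu c i"
proof (cases "i = d")
  case True assume "c \<in> R" thus ?thesis using True mu_d unfolding Tm_def by simp
next
  case False assume c: "c \<in> R"
  have Sp: "0 < SS c (mu c) i" using SS_pos[OF c False] .
  have "exp (theta i * mu c i) * SS c (mu c) i = 1" using mu_eq1[OF c False] EE_SS by simp
  hence "ln (exp (theta i * mu c i) * SS c (mu c) i) = 0" by simp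
  hence "theta i * mu c i + ln (SS c (mu c) i) = 0" using Sp by (simp add: ln_mult)
  hence "mu c i = - ln (SS c (mu c) i) / theta i" using theta_pos[of i] by (simp add: field_simps)
  thus ?thesis unfolding Tm_def using False by simp
qed

lemma T_mono:
  assumes "c \<in> R" "\<And>j. v j \<le> v' j"
  shows "Tm c v i \<le> Tm c v' i"
proof (cases "i = d")
  case True thus ?thesis unfolding Tm_def by simp
next
  case False
  have "SS c v' i \<le> SS c v i" unfolding SS_def
  proof (rule sum_mono)
    fix l
    have "exp (- theta i * (c $ l + v' (tgt l))) \<le> exp (- theta i * (c $ l + v (tgt l)))"
      using assms(2)[of "tgt l"] theta_pos[of i] by (simp add: mult_left_mono)
    thus "alpha l * exp (- theta i * (c $ l + v' (tgt l))) \<le> alpha l * exp (- theta i * (c $ l + v (tgt l)))"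
      using alpha_nn[of l] by (rule mult_left_mono)
  qed
  hence "ln (SS c v' i) \<le> ln (SS c v i)" using SS_pos[OF assms(1) False] by simp
  hence "- ln (SS c v i) / theta i \<le> - ln (SS c v' i) / theta i"
    using theta_pos[of i] by (simp add: divide_right_mono)
  thus ?thesis unfolding Tm_def using False by simp
qed

lemma T_shift:
  assumes c: "c \<in> R" and s: "0 \<le> s"
  defines "U \<equiv> (\<lambda>j. if j = d then 0 else mu c j + s)"
  shows "Tm c U i \<le> U i"
proof (cases "i = d")
  case True thus ?thesis unfolding Tm_def U_def by simp
next
  case False
  have "exp (- theta i * s) * SS c (mu c) i \<le> SS c U i" unfolding SS_def sum_distrib_left
  proof (rule sum_mono)
    fix l
    have Ul: "U (tgt l) \<le> mu c (tgt l) + s" unfolding U_def using mu_d[OF c] s by auto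
    have "exp (- theta i * s) * exp (- theta i * (c $ l + mu c (tgt l)))
        = exp (- theta i * (c $ l + (mu c (tgt l) + s)))" by (simp add: exp_add[symmetric] algebra_simps)
    also have "\<dots> \<le> exp (- theta i * (c $ l + U (tgt l)))"
      using Ul theta_pos[of i] by (simp add: mult_left_mono)
    finally show "exp (- theta i * s) * (alpha l * exp (- theta i * (c $ l + mu c (tgt l))))
        \<le> alpha l * exp (- theta i * (c $ l + U (tgt l)))"
      using alpha_nn[of l] by (simp add: mult_left_mono algebra_simps)
  qed
  moreover have Sp: "0 < SS c (mu c) i" using SS_pos[OF c False] .
  ultimately have "ln (exp (- theta i * s) * SS c (mu c) i) \<le> ln (SS c U i)"
  proof -
    assume a: "exp (- theta i * s) * SS c (mu c) i \<le> SS c U i"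
    have p: "0 < exp (- theta i * s) * SS c (mu c) i" using Sp by simp
    show ?thesis using ln_le_cancel_iff[OF p] a p by auto
  qed
  hence "- theta i * s + ln (SS c (mu c) i) \<le> ln (SS c U i)" using Sp by (simp add: ln_mult)
  hence "- ln (SS c U i) / theta i \<le> s + (- ln (SS c (mu c) i) / theta i)"
    using theta_pos[of i] by (simp add: field_simps)
  also have "- ln (SS c (mu c) i) / theta i = mu c i" using T_mu[OF c, of i] False unfolding Tm_def by simp
  finally show ?thesis unfolding Tm_def U_def using False by simp
qed

lemma T_cont:
  assumes c: "c \<in> R" and lim: "\<And>j. (\<lambda>k. v k j) \<longlonglongrightarrow> L j"
  shows "(\<lambda>k. Tm c (v k) i) \<longlonglongrightarrow> Tm c L i"
proof (cases "i = d")
  case True thus ?thesis unfolding Tm_def by simp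
next
  case False
  have "(\<lambda>k. SS c (v k) i) \<longlonglongrightarrow> SS c L i" unfolding SS_def
    by (intro tendsto_intros lim)
  hence "(\<lambda>k. - ln (SS c (v k) i) / theta i) \<longlonglongrightarrow> - ln (SS c L i) / theta i"
  proof -
    have "SS c L i \<noteq> 0" using SS_pos[OF c False, of c L] by simp
    moreover have "theta i \<noteq> 0" using theta_pos[of i] by simp
    ultimately show ?thesis using \<open>(\<lambda>k. SS c (v k) i) \<longlonglongrightarrow> SS c L i\<close> by (intro tendsto_intros) auto
  qed
  thus ?thesis unfolding Tm_def using False by simp
qed

lemma comparison:
  assumes c: "c \<in> R" and wd: "w d = 0" and sub: "\<And>i. i \<noteq> d \<Longrightarrow> EE c w i \<le> 1"
  shows "w i \<le> mu c i"
proof -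
  define s where "s = (\<Sum>j\<in>UNIV. \<bar>w j - mu c j\<bar>)"
  have s0: "0 \<le> s" unfolding s_def by (simp add: sum_nonneg)
  define U where "U = (\<lambda>j. if j = d then 0 else mu c j + s)"
  have wU: "w j \<le> U j" for j
  proof (cases "j = d")
    case True thus ?thesis using wd unfolding U_def by simp
  next
    case False
    have "\<bar>w j - mu c j\<bar> \<le> s" unfolding s_def by (rule member_le_sum) auto
    thus ?thesis unfolding U_def using False by simp
  qed
  define v where "v = (\<lambda>k. ((\<lambda>u. Tm c u) ^^ k) w)"
  have v0: "v 0 = w" unfolding v_def by simp
  have vS: "v (Suc k) = Tm c (v k)" for k unfolding v_def by simp
  have wT: "w j \<le> Tm c w j" for j
    using sub_le_T[OF c _ sub] wd unfolding Tm_def by (cases "j = d") auto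
  have inv: "(\<forall>j. v k j \<le> v (Suc k) j) \<and> (\<forall>j. v k j \<le> U j)" for k
  proof (induction k)
    case 0 thus ?case using v0 vS wT wU by simp
  next
    case (Suc k)
    have "\<forall>j. v (Suc k) j \<le> v (Suc (Suc k)) j"
      using Suc T_mono[OF c] by (simp add: vS)
    moreover have "\<forall>j. v (Suc k) j \<le> U j"
    proof
      fix j
      have "Tm c (v k) j \<le> Tm c U j" using Suc T_mono[OF c] by blast
      also have "\<dots> \<le> U j" using T_shift[OF c s0] unfolding U_def by blast
      finally show "v (Suc k) j \<le> U j" by (simp add: vS)
    qed
    ultimately show ?case by blast
  qed
  have inc: "incseq (\<lambda>k. v k j)" for j using inv by (intro incseq_SucI) blast
  have bdd: "bdd_above (range (\<lambda>k. v k j))" for j using inv by (intro bdd_aboveI2) blast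
  define L where "L = (\<lambda>j. Sup (range (\<lambda>k. v k j)))"
  have lim: "(\<lambda>k. v k j) \<longlonglongrightarrow> L j" for j unfolding L_def by (rule LIMSEQ_incseq_SUP[OF bdd inc])
  have fixL: "L j = Tm c L j" for j
  proof -
    have "(\<lambda>k. Tm c (v k) j) \<longlonglongrightarrow> Tm c L j" by (rule T_cont[OF c lim])
    hence "(\<lambda>k. v (Suc k) j) \<longlonglongrightarrow> Tm c L j" by (simp add: vS)
    moreover have "(\<lambda>k. v (Suc k) j) \<longlonglongrightarrow> L j" using lim by (rule LIMSEQ_Suc)
    ultimately show ?thesis using LIMSEQ_unique by blast
  qed
  have Ld: "L d = 0" using fixL[of d] unfolding Tm_def by simp
  have "mu_eqs src tgt alpha theta d c L" by (rule fixed_imp_eqs[where w = L, OF c Ld]) (use fixL in auto)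
  hence "L = mu c" by (rule mu_uniq[OF c])
  moreover have "w i \<le> L i" using incseq_le[OF inc lim, of 0] v0 by simp
  ultimately show ?thesis by simp
qed

lemma exp_conv:
  fixes u v a b :: real
  assumes "0 \<le> u" "0 \<le> v" "u + v = 1"
  shows "exp (u * a + v * b) \<le> u * exp a + v * exp b"
proof -
  have u: "u = 1 - v" and v1: "v \<le> 1" using assms by auto
  have "exp ((1 - v) * a + v * b) \<le> (1 - v) * exp a + v * exp b"
    using convex_onD[OF exp_convex, of v a b] assms(2) v1 by simp
  thus ?thesis unfolding u .
qed

lemma mu_concave:
  assumes "convex S" "S \<subseteq> R"
  shows "concave_on S (\<lambda>c. mu c i)"
  unfolding concave_on_def convex_on_def
proof (intro conjI ballI allI impI)
  show "convex S" by fact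
  fix c1 c2 and u v :: real
  assume c1: "c1 \<in> S" and c2: "c2 \<in> S" and uv: "0 \<le> u" "0 \<le> v" "u + v = 1"
  define c where "c = u *\<^sub>R c1 + v *\<^sub>R c2"
  have cS: "c \<in> S" unfolding c_def using assms(1) c1 c2 uv by (rule convexD)
  have R: "c1 \<in> R" "c2 \<in> R" "c \<in> R" using c1 c2 cS assms(2) by auto
  define w where "w = (\<lambda>j. u * mu c1 j + v * mu c2 j)"
  have wd: "w d = 0" unfolding w_def using mu_d R by simp
  have sub: "EE c w j \<le> 1" if j: "j \<noteq> d" for j
  proof -
    have "EE c w j \<le> (\<Sum>l\<in>{l. src l = j}. alpha l * (u * exp (- theta j * (c1 $ l + mu c1 (tgt l) - mu c1 j))
                                     + v * exp (- theta j * (c2 $ l + mu c2 (tgt l) - mu c2 j))))"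
      unfolding EE_def
    proof (rule sum_mono)
      fix l
      have "- theta j * (c $ l + w (tgt l) - w j)
          = u * (- theta j * (c1 $ l + mu c1 (tgt l) - mu c1 j)) + v * (- theta j * (c2 $ l + mu c2 (tgt l) - mu c2 j))"
        unfolding c_def w_def using uv by (simp add: algebra_simps)
      hence "exp (- theta j * (c $ l + w (tgt l) - w j))
           = exp (u * (- theta j * (c1 $ l + mu c1 (tgt l) - mu c1 j)) + v * (- theta j * (c2 $ l + mu c2 (tgt l) - mu c2 j)))"
        by (simp only:)
      also have "\<dots> \<le> u * exp (- theta j * (c1 $ l + mu c1 (tgt l) - mu c1 j)) + v * exp (- theta j * (c2 $ l + mu c2 (tgt l) - mu c2 j))"
        by (rule exp_conv[OF uv])
      finally have "exp (- theta j * (c $ l + w (tgt l) - w j))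
           \<le> u * exp (- theta j * (c1 $ l + mu c1 (tgt l) - mu c1 j)) + v * exp (- theta j * (c2 $ l + mu c2 (tgt l) - mu c2 j))" .
      thus "alpha l * exp (- theta j * (c $ l + w (tgt l) - w j))
          \<le> alpha l * (u * exp (- theta j * (c1 $ l + mu c1 (tgt l) - mu c1 j))
                       + v * exp (- theta j * (c2 $ l + mu c2 (tgt l) - mu c2 j)))"
        using alpha_nn[of l] by (rule mult_left_mono)
    qed
    also have "\<dots> = u * EE c1 (mu c1) j + v * EE c2 (mu c2) j"
      unfolding EE_def by (simp add: sum.distrib sum_distrib_left algebra_simps)
    also have "\<dots> = 1" using mu_eq1[OF R(1) j] mu_eq1[OF R(2) j] uv by simp
    finally show ?thesis .
  qed
  have "w i \<le> mu c i" by (rule comparison[OF R(3) wd sub])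
  thus "- mu (u *\<^sub>R c1 + v *\<^sub>R c2) i \<le> u * - mu c1 i + v * - mu c2 i"
    unfolding w_def c_def by simp
qed

end

lemma convex_from_sub:
  fixes f :: "'a::real_inner \<Rightarrow> real"
  assumes "convex S" and sub: "\<And>x y. x \<in> S \<Longrightarrow> y \<in> S \<Longrightarrow> f x + g x \<bullet> (y - x) \<le> f y"
  shows "convex_on S f"
  unfolding convex_on_def
proof (intro conjI ballI allI impI)
  show "convex S" by fact
  fix x y and u v :: real
  assume xy: "x \<in> S" "y \<in> S" and uv: "0 \<le> u" "0 \<le> v" "u + v = 1"
  define m where "m = u *\<^sub>R x + v *\<^sub>R y"
  have mS: "m \<in> S" unfolding m_def using assms(1) xy uv by (rule convexD)
  have 1: "f m + g m \<bullet> (x - m) \<le> f x" using sub[OF mS xy(1)] .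
  have 2: "f m + g m \<bullet> (y - m) \<le> f y" using sub[OF mS xy(2)] .
  have "u * (f m + g m \<bullet> (x - m)) + v * (f m + g m \<bullet> (y - m)) \<le> u * f x + v * f y"
    using 1 2 uv by (intro add_mono mult_left_mono) auto
  moreover have "u * (f m + g m \<bullet> (x - m)) + v * (f m + g m \<bullet> (y - m)) = f m + g m \<bullet> (u *\<^sub>R x + v *\<^sub>R y - m)"
  proof -
    have "u * (f m + g m \<bullet> (x - m)) + v * (f m + g m \<bullet> (y - m))
        = (u + v) * f m + g m \<bullet> (u *\<^sub>R x + v *\<^sub>R y - (u + v) *\<^sub>R m)"
      by (simp add: algebra_simps inner_diff_right inner_add_right)
    thus ?thesis using uv by simp
  qed
  ultimately show "f (u *\<^sub>R x + v *\<^sub>R y) \<le> u * f x + v * f y" unfolding m_def by simp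
qed

lemma convex_lipschitz:
  fixes f :: "'a::euclidean_space \<Rightarrow> real"
  assumes U: "open U" and cf: "convex_on U f" and sub: "cball c (2*r) \<subseteq> U" and r: "0 < r"
  shows "\<exists>K. \<forall>x\<in>cball c r. \<forall>y\<in>cball c r. \<bar>f x - f y\<bar> \<le> K * norm (x - y)"
proof -
  have "continuous_on U f" by (rule convex_on_continuous[OF U cf])
  hence "continuous_on (cball c (2*r)) f" using sub continuous_on_subset by blast
  hence "compact (f ` cball c (2*r))" by (intro compact_continuous_image) auto
  hence "bounded (f ` cball c (2*r))" by (rule compact_imp_bounded)
  then obtain M where M0: "\<forall>x\<in>f ` cball c (2*r). norm x \<le> M"
    unfolding bounded_iff by blast
  have M: "\<And>z. z \<in> cball c (2*r) \<Longrightarrow> \<bar>f z\<bar> \<le> M" using M0 by auto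
  have one: "f y - f x \<le> (2 * M / r) * norm (x - y)" if xy: "x \<in> cball c r" "y \<in> cball c r" for x y
  proof (cases "x = y")
    case True thus ?thesis by simp
  next
    case False
    define D where "D = y - x"
    have nD: "norm D > 0" unfolding D_def using False by simp
    define z where "z = y + (r / norm D) *\<^sub>R D"
    define lam where "lam = norm D / (norm D + r)"
    have lam01: "0 \<le> lam" "lam \<le> 1" unfolding lam_def using nD r by (auto simp: divide_le_eq_1 add_pos_pos)
    have zc: "z \<in> cball c (2*r)"
    proof -
      have "dist c z \<le> dist c y + norm ((r / norm D) *\<^sub>R D)"
        unfolding z_def dist_norm by (metis diff_diff_eq2 norm_triangle_ineq4 add.commute diff_add_eq_diff_diff_swap)
      also have "norm ((r / norm D) *\<^sub>R D) = r" using nD r by simp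
      finally show ?thesis using xy by simp
    qed
    have "x \<in> cball c (2*r)" using xy r by auto
    hence xU: "x \<in> U" "z \<in> U" using zc sub by auto
    have "(1 - lam) *\<^sub>R x + lam *\<^sub>R z = x + lam *\<^sub>R (z - x)" by (simp add: algebra_simps)
    also have "z - x = ((norm D + r) / norm D) *\<^sub>R D"
    proof -
      have "z - x = D + (r / norm D) *\<^sub>R D" unfolding z_def D_def by simp
      also have "\<dots> = (1 + r / norm D) *\<^sub>R D" by (simp add: scaleR_left_distrib)
      also have "1 + r / norm D = (norm D + r) / norm D" using nD by (simp add: field_simps)
      finally show ?thesis .
    qed
    also have "lam *\<^sub>R (((norm D + r) / norm D) *\<^sub>R D) = D"
    proof -
      have ndr: "norm D + r \<noteq> 0" using nD r by linarith
      thus ?thesis unfolding lam_def using nD by simp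
    qed
    finally have yeq: "(1 - lam) *\<^sub>R x + lam *\<^sub>R z = y" unfolding D_def by simp
    have "f y \<le> (1 - lam) * f x + lam * f z"
      using convex_onD[OF cf lam01 xU] yeq by simp
    hence "f y - f x \<le> lam * (f z - f x)" by (simp add: algebra_simps)
    also have "\<dots> \<le> lam * (2 * M)"
    proof -
      have "x \<in> cball c (2*r)" using xy r by auto
      hence "\<bar>f x\<bar> \<le> M" by (rule M)
      thus ?thesis using M[OF zc] lam01 by (intro mult_left_mono) auto
    qed
    also have "lam \<le> norm D / r" unfolding lam_def using nD r by (simp add: frac_le)
    hence "lam * (2 * M) \<le> (norm D / r) * (2 * M)" using M[OF zc] by (intro mult_right_mono) auto
    finally show ?thesis unfolding D_def by (simp add: norm_minus_commute field_simps)
  qed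
  show ?thesis
  proof (intro exI ballI)
    fix x y assume "x \<in> cball c r" "y \<in> cball c r"
    thus "\<bar>f x - f y\<bar> \<le> 2 * M / r * norm (x - y)"
      using one[of x y] one[of y x] by (simp add: norm_minus_commute abs_le_iff)
  qed
qed

lemma tangent_ineq:
  fixes f :: "'a::real_normed_vector \<Rightarrow> real"
  assumes cf: "convex_on U f" and xy: "x \<in> U" "y \<in> U"
    and df: "(f has_derivative f') (at x)"
  shows "f x + f' (y - x) \<le> f y"
proof (cases "y = x")
  case True
  have "f' 0 = 0" using df has_derivative_bounded_linear linear_simps(3) by blast
  thus ?thesis using True by simp
next
  case False
  define D where "D = y - x"
  have nD: "norm D > 0" unfolding D_def using False by simp
  interpret L: bounded_linear f' using df has_derivative_bounded_linear by blast
  show ?thesis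
  proof (rule field_le_epsilon)
    fix e :: real assume e: "0 < e"
    define e' where "e' = e / norm D"
    have e': "0 < e'" unfolding e'_def using e nD by simp
    obtain dl where dl: "0 < dl" "\<And>z. norm (z - x) < dl \<Longrightarrow> norm (f z - f x - f' (z - x)) \<le> e' * norm (z - x)"
      using df e' unfolding has_derivative_at_alt by blast
    define s where "s = min 1 (dl / (2 * norm D))"
    have s: "0 < s" "s \<le> 1" unfolding s_def using dl nD by auto
    have "norm ((x + s *\<^sub>R D) - x) = s * norm D" using s by simp
    also have "\<dots> \<le> (dl / (2 * norm D)) * norm D" unfolding s_def using nD by (intro mult_right_mono) auto
    also have "\<dots> < dl" using nD dl by simp
    finally have "norm (f (x + s *\<^sub>R D) - f x - f' (s *\<^sub>R D)) \<le> e' * norm (s *\<^sub>R D)"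
      using dl(2)[of "x + s *\<^sub>R D"] by simp
    hence A: "s * f' D \<le> f (x + s *\<^sub>R D) - f x + e' * (s * norm D)"
      using s by (simp add: L.scaleR abs_le_iff)
    have "x + s *\<^sub>R D = (1 - s) *\<^sub>R x + s *\<^sub>R y" unfolding D_def by (simp add: algebra_simps)
    hence B: "f (x + s *\<^sub>R D) \<le> (1 - s) * f x + s * f y"
      using convex_onD[OF cf, of s x y] s xy by simp
    have "s * f' D \<le> s * (f y - f x) + s * e"
      using A B e'_def nD by (simp add: algebra_simps)
    hence "f' D \<le> f y - f x + e" using s
      by (metis distrib_left mult_le_cancel_left_pos)
    thus "f x + f' (y - x) \<le> f y + e" unfolding D_def by simp
  qed
qed

lemma sub_deriv:
  fixes f :: "'a::real_inner \<Rightarrow> real"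
  assumes V: "open V" "c \<in> V" and sub: "\<And>x y. x \<in> V \<Longrightarrow> y \<in> V \<Longrightarrow> f x + X x \<bullet> (y - x) \<le> f y"
    and cX: "isCont X c"
  shows "(f has_derivative (\<lambda>h. X c \<bullet> h)) (at c)"
  unfolding has_derivative_at_alt
proof (intro conjI allI impI)
  show "bounded_linear ((\<bullet>) (X c))" by (rule bounded_linear_inner_right)
  fix e :: real assume e: "0 < e"
  obtain d1 where d1: "0 < d1" "\<And>y. dist y c < d1 \<Longrightarrow> dist (X y) (X c) < e"
    using cX e unfolding continuous_at_eps_delta by blast
  obtain d2 where d2: "0 < d2" "ball c d2 \<subseteq> V" using V open_contains_ball by blast
  show "\<exists>d>0. \<forall>y. norm (y - c) < d \<longrightarrow> norm (f y - f c - X c \<bullet> (y - c)) \<le> e * norm (y - c)"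
  proof (intro exI[of _ "min d1 d2"] conjI allI impI)
    show "0 < min d1 d2" using d1 d2 by simp
    fix y assume y: "norm (y - c) < min d1 d2"
    have yV: "y \<in> V" using y d2 by (auto simp: dist_norm norm_minus_commute)
    have lo: "0 \<le> f y - f c - X c \<bullet> (y - c)" using sub[OF V(2) yV] by simp
    have "f y - f c \<le> X y \<bullet> (y - c)" using sub[OF yV V(2)] by (simp add: inner_diff_right)
    hence "f y - f c - X c \<bullet> (y - c) \<le> (X y - X c) \<bullet> (y - c)" by (simp add: inner_diff_left)
    also have "\<dots> \<le> norm (X y - X c) * norm (y - c)" by (rule order_trans[OF abs_ge_self Cauchy_Schwarz_ineq2])
    also have "\<dots> \<le> e * norm (y - c)"
      using d1(2)[of y] y by (intro mult_right_mono) (auto simp: dist_norm)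
    finally show "norm (f y - f c - X c \<bullet> (y - c)) \<le> e * norm (y - c)" using lo by simp
  qed
qed

lemma grad_cont:
  fixes f :: "real^'l::finite \<Rightarrow> real" and g :: "real^'l \<Rightarrow> real^'l"
  assumes U: "open U" and cf: "convex_on U f"
    and df: "\<And>x. x \<in> U \<Longrightarrow> (f has_derivative (\<lambda>h. g x \<bullet> h)) (at x)" and c: "c \<in> U"
  shows "isCont g c"
proof -
  have contf: "continuous_on U f" by (rule convex_on_continuous[OF U cf])
  have icf: "isCont f y" if "y \<in> U" for y
    using contf U that continuous_on_eq_continuous_at by blast
  obtain rho where rho: "0 < rho" "ball c rho \<subseteq> U" using U c open_contains_ball by blast
  have comp: "((\<lambda>x. g x $ i) \<longlongrightarrow> g c $ i) (at c)" for i
  proof (rule tendstoI)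
    fix e :: real assume e: "0 < e"
    define E :: "real^'l" where "E = axis i 1"
    have gE: "v \<bullet> (s *\<^sub>R E) = s * v $ i" for v s unfolding E_def by (simp add: inner_axis)
    have nE: "norm E = 1" unfolding E_def by simp
    obtain d0 where d0: "0 < d0" "\<And>y. norm (y - c) < d0 \<Longrightarrow> norm (f y - f c - g c \<bullet> (y - c)) \<le> (e/4) * norm (y - c)"
      using df[OF c] e unfolding has_derivative_at_alt by (metis divide_pos_pos zero_less_numeral)
    define t where "t = min (rho/2) (d0/2)"
    have t: "0 < t" "t < rho" "t < d0" "t \<le> rho / 2" unfolding t_def using rho d0 by auto
    have ntE: "norm (t *\<^sub>R E) = t" "norm (- (t *\<^sub>R E)) = t" using nE t by auto
    have inU: "y \<in> U" if "norm (y - c) < rho" for y using that rho by (auto simp: dist_norm norm_minus_commute)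
    have cp: "c + t *\<^sub>R E \<in> U" "c - t *\<^sub>R E \<in> U" using inU ntE t by auto
    have up1: "f (c + t *\<^sub>R E) - f c \<le> t * g c $ i + (e/4) * t"
    proof -
      have h: "(c + t *\<^sub>R E) - c = t *\<^sub>R E" by simp
      have "norm (f (c + t *\<^sub>R E) - f c - g c \<bullet> ((c + t *\<^sub>R E) - c)) \<le> (e/4) * norm ((c + t *\<^sub>R E) - c)"
        by (rule d0(2)) (simp only: h ntE t)
      hence "\<bar>f (c + t *\<^sub>R E) - f c - t * g c $ i\<bar> \<le> (e/4) * t"
        unfolding h gE ntE real_norm_def .
      thus ?thesis unfolding abs_le_iff by linarith
    qed
    have up2: "f (c - t *\<^sub>R E) - f c \<le> - t * g c $ i + (e/4) * t"
    proof -
      have h: "(c - t *\<^sub>R E) - c = (- t) *\<^sub>R E" by simp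
      have "norm (f (c - t *\<^sub>R E) - f c - g c \<bullet> ((c - t *\<^sub>R E) - c)) \<le> (e/4) * norm ((c - t *\<^sub>R E) - c)"
        by (rule d0(2)) (use t in \<open>simp add: h nE\<close>)
      hence "\<bar>f (c - t *\<^sub>R E) - f c - (- t) * g c $ i\<bar> \<le> (e/4) * t"
        unfolding h gE using ntE by simp
      thus ?thesis unfolding abs_le_iff by linarith
    qed
    have et: "0 < e * t / 4" using e t by simp
    have ev1: "eventually (\<lambda>x. dist (f x) (f c) < e * t / 4) (at c)"
      using icf[OF c] et unfolding isCont_def by (rule tendstoD)
    have "((\<lambda>x. f (x + t *\<^sub>R E)) \<longlongrightarrow> f (c + t *\<^sub>R E)) (at c)"
      by (rule isCont_tendsto_compose[OF icf[OF cp(1)]]) (intro tendsto_intros)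
    hence ev2: "eventually (\<lambda>x. dist (f (x + t *\<^sub>R E)) (f (c + t *\<^sub>R E)) < e * t / 4) (at c)"
      using et by (rule tendstoD)
    have "((\<lambda>x. f (x - t *\<^sub>R E)) \<longlongrightarrow> f (c - t *\<^sub>R E)) (at c)"
      by (rule isCont_tendsto_compose[OF icf[OF cp(2)]]) (intro tendsto_intros)
    hence ev3: "eventually (\<lambda>x. dist (f (x - t *\<^sub>R E)) (f (c - t *\<^sub>R E)) < e * t / 4) (at c)"
      using et by (rule tendstoD)
    have ev4: "eventually (\<lambda>x. dist x c < rho / 2) (at c)"
      unfolding eventually_at using rho by (intro exI[of _ "rho/2"]) auto
    show "eventually (\<lambda>x. dist (g x $ i) (g c $ i) < e) (at c)"
      using ev1 ev2 ev3 ev4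
    proof eventually_elim
      case (elim x)
      have xU: "x \<in> U" using elim(4) inU rho by (auto simp: dist_norm)
      have "norm (x + t *\<^sub>R E - c) \<le> norm (x - c) + norm (t *\<^sub>R E)"
        by (metis add_diff_eq diff_add_eq norm_triangle_ineq add.commute)
      hence xp: "x + t *\<^sub>R E \<in> U" using elim(4) ntE t by (intro inU) (auto simp: dist_norm)
      have "norm (x - t *\<^sub>R E - c) \<le> norm (x - c) + norm (t *\<^sub>R E)"
        by (metis diff_diff_eq2 diff_add_eq norm_triangle_ineq4 add.commute diff_diff_eq)
      hence xm: "x - t *\<^sub>R E \<in> U" using elim(4) ntE t by (intro inU) (auto simp: dist_norm)
      have tg1: "f x + g x \<bullet> ((x + t *\<^sub>R E) - x) \<le> f (x + t *\<^sub>R E)"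
        by (rule tangent_ineq[OF cf xU xp df[OF xU]])
      have h1: "(x + t *\<^sub>R E) - x = t *\<^sub>R E" by simp
      have tg1': "f x + t * g x $ i \<le> f (x + t *\<^sub>R E)" using tg1 unfolding h1 gE .
      have tg2: "f x + g x \<bullet> ((x - t *\<^sub>R E) - x) \<le> f (x - t *\<^sub>R E)"
        by (rule tangent_ineq[OF cf xU xm df[OF xU]])
      have h2: "(x - t *\<^sub>R E) - x = (- t) *\<^sub>R E" by simp
      have tg2': "f x + (- t) * g x $ i \<le> f (x - t *\<^sub>R E)" using tg2 unfolding h2 gE .
      have b1: "\<bar>f x - f c\<bar> < e * t / 4" "\<bar>f (x + t *\<^sub>R E) - f (c + t *\<^sub>R E)\<bar> < e * t / 4"
        "\<bar>f (x - t *\<^sub>R E) - f (c - t *\<^sub>R E)\<bar> < e * t / 4"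
        using elim(1,2,3) unfolding dist_real_def by auto
      have a1: "t * g x $ i \<le> t * g c $ i + (3/4) * e * t"
        using tg1' up1 b1 unfolding abs_less_iff by linarith
      have a2: "- t * g x $ i \<le> - t * g c $ i + (3/4) * e * t"
        using tg2' up2 b1 unfolding abs_less_iff by linarith
      have "g x $ i \<le> g c $ i + (3/4) * e" using a1 t
        by (smt (verit, ccfv_SIG) mult_le_cancel_left_pos distrib_left mult.commute mult.left_commute)
      moreover have "g c $ i - (3/4) * e \<le> g x $ i" using a2 t
        by (smt (verit, ccfv_SIG) mult_le_cancel_left_pos distrib_left mult.commute mult.left_commute mult_minus_left)
      ultimately show ?case using e by (simp add: dist_real_def abs_less_iff)
    qed
  qed
  have "(g \<longlongrightarrow> g c) (at c)" by (rule vec_tendstoI) (rule comp)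
  thus ?thesis unfolding isCont_def .
qed

lemma expb:
  fixes u :: real
  assumes "\<bar>u\<bar> \<le> 1"
  shows "\<bar>exp u - 1 - u\<bar> \<le> u^2"
proof -
  have lo: "1 + u \<le> exp u" by (rule exp_ge_add_one_self)
  have hi: "exp u \<le> 1 + u + u^2"
  proof (cases "0 \<le> u")
    case True thus ?thesis using exp_bound[of u] assms by simp
  next
    case False
    define v where "v = - u"
    have v: "0 < v" "v \<le> 1" using False assms unfolding v_def by auto
    have ev: "1 + v \<le> exp v" by (rule exp_ge_add_one_self)
    have "exp u = 1 / exp v" unfolding v_def by (simp add: exp_minus inverse_eq_divide)
    also have "\<dots> \<le> 1 / (1 + v)" using ev v by (intro divide_left_mono) auto
    also have "\<dots> \<le> 1 - v + v^2"
    proof -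
      have "1 \<le> (1 + v) * (1 - v + v^2)" using v by (simp add: algebra_simps power2_eq_square power3_eq_cube)
      thus ?thesis using v by (simp add: divide_le_eq mult.commute)
    qed
    also have "\<dots> = 1 + u + u^2" unfolding v_def by simp
    finally show ?thesis .
  qed
  have "0 \<le> u^2" by simp
  thus ?thesis using lo hi unfolding abs_le_iff by linarith
qed

lemma sum_group_fun:
  fixes f :: "'l::finite \<Rightarrow> 'n::finite"
  shows "(\<Sum>i\<in>UNIV. \<Sum>l\<in>{l. f l = i}. h l) = (\<Sum>l\<in>UNIV. h l)"
proof -
  have "(\<Sum>i\<in>UNIV. sum h {l \<in> UNIV. f l = i}) = sum h UNIV"
    by (rule sum.group) auto
  thus ?thesis by simp
qed

context ngev begin

definition pp where "pp c = ngev_prob src tgt alpha theta (mu c) c"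
definition xf where "xf c = ngev_flow src tgt alpha theta d q c"
definition zz where "zz c i = q i + (\<Sum>h\<in>{h. tgt h = i}. xf c $ h)"
definition ww where "ww c i = (if i = d then 0 else zz c i)"
definition Phi where "Phi Orig c = (\<Sum>i\<in>UNIV. mu c i * qtilde Orig q d i)"
definition rr where "rr c c' i = (mu c' i - mu c i) -
    (\<Sum>l\<in>{l. src l = i}. pp c l * ((c' - c) $ l + (mu c' (tgt l) - mu c (tgt l))))"

lemma xf_ok: "c \<in> R \<Longrightarrow> flow_eqs src tgt (pp c) d q (xf c)"
  unfolding xf_def ngev_flow_def pp_def by (rule theI'[OF flow_wp])

lemma xf_eq: "c \<in> R \<Longrightarrow> xf c $ l = ww c (src l) * pp c l"
  using xf_ok[of c] unfolding flow_eqs_def ww_def zz_def by simp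

lemma SS_mu: "c \<in> R \<Longrightarrow> i \<noteq> d \<Longrightarrow> SS c (mu c) i = exp (- theta i * mu c i)"
proof -
  assume c: "c \<in> R" and i: "i \<noteq> d"
  have "exp (theta i * mu c i) * SS c (mu c) i = 1" using mu_eq1[OF c i] EE_SS by simp
  thus ?thesis by (simp add: exp_minus field_simps)
qed

lemma pp_eq:
  assumes c: "c \<in> R" and l: "src l \<noteq> d"
  shows "pp c l = alpha l * exp (- theta (src l) * (c $ l + mu c (tgt l) - mu c (src l)))"
proof -
  have "pp c l = alpha l * exp (- theta (src l) * (c $ l + mu c (tgt l))) / SS c (mu c) (src l)"
    unfolding pp_def ngev_prob_def SS_def ..
  also have "\<dots> = alpha l * exp (- theta (src l) * (c $ l + mu c (tgt l))) / exp (- theta (src l) * mu c (src l))"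
    using SS_mu[OF c l] by simp
  also have "\<dots> = alpha l * exp (- theta (src l) * (c $ l + mu c (tgt l)) - (- theta (src l) * mu c (src l)))"
    by (simp only: exp_diff times_divide_eq_right)
  also have "- theta (src l) * (c $ l + mu c (tgt l)) - (- theta (src l) * mu c (src l))
      = - theta (src l) * (c $ l + mu c (tgt l) - mu c (src l))" by (simp add: algebra_simps)
  finally show ?thesis .
qed

lemma pp_nn: "c \<in> R \<Longrightarrow> src l \<noteq> d \<Longrightarrow> 0 \<le> pp c l"
  using pp_eq alpha_nn by simp

lemma pp_sum:
  assumes c: "c \<in> R" and i: "i \<noteq> d"
  shows "(\<Sum>l\<in>{l. src l = i}. pp c l) = 1"
proof -
  have "(\<Sum>l\<in>{l. src l = i}. pp c l) = EE c (mu c) i"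
    unfolding EE_def by (rule sum.cong) (use pp_eq[OF c] i in auto)
  thus ?thesis using mu_eq1[OF c i] by simp
qed

lemma identity:
  assumes c: "c \<in> R" and c': "c' \<in> R"
  shows "Phi Orig c' - Phi Orig c - xf c \<bullet> (c' - c) = (\<Sum>i\<in>UNIV. ww c i * rr c c' i)"
proof -
  define dl where "dl = (\<lambda>j. mu c' j - mu c j)"
  define D where "D = c' - c"
  have dld: "dl d = 0" unfolding dl_def using mu_d c c' by simp
  have P: "Phi Orig c' - Phi Orig c = (\<Sum>i\<in>UNIV. q i * dl i)"
  proof -
    have "Phi Orig c' - Phi Orig c = (\<Sum>i\<in>UNIV. dl i * qtilde Orig q d i)"
      unfolding Phi_def dl_def by (simp add: sum_subtractf left_diff_distrib)
    also have "\<dots> = (\<Sum>i\<in>UNIV. q i * dl i)"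
      by (rule sum.cong) (auto simp: qtilde_def dld)
    finally show ?thesis .
  qed
  have A: "(\<Sum>i\<in>UNIV. ww c i * rr c c' i) = (\<Sum>i\<in>UNIV. ww c i * dl i)
      - (\<Sum>i\<in>UNIV. ww c i * (\<Sum>l\<in>{l. src l = i}. pp c l * (D $ l + dl (tgt l))))"
    unfolding rr_def dl_def D_def by (simp add: sum_subtractf right_diff_distrib)
  have B: "(\<Sum>i\<in>UNIV. ww c i * dl i) = (\<Sum>i\<in>UNIV. zz c i * dl i)"
    by (rule sum.cong) (auto simp: ww_def dld)
  have C: "(\<Sum>i\<in>UNIV. ww c i * (\<Sum>l\<in>{l. src l = i}. pp c l * (D $ l + dl (tgt l))))
      = (\<Sum>l\<in>UNIV. xf c $ l * (D $ l + dl (tgt l)))"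
  proof -
    have "(\<Sum>i\<in>UNIV. ww c i * (\<Sum>l\<in>{l. src l = i}. pp c l * (D $ l + dl (tgt l))))
       = (\<Sum>i\<in>UNIV. \<Sum>l\<in>{l. src l = i}. xf c $ l * (D $ l + dl (tgt l)))"
      unfolding sum_distrib_left
      by (rule sum.cong[OF refl], rule sum.cong[OF refl]) (auto simp: xf_eq[OF c])
    also have "\<dots> = (\<Sum>l\<in>UNIV. xf c $ l * (D $ l + dl (tgt l)))" by (rule sum_group_fun)
    finally show ?thesis .
  qed
  have Dx: "(\<Sum>l\<in>UNIV. xf c $ l * (D $ l + dl (tgt l))) = xf c \<bullet> D + (\<Sum>l\<in>UNIV. xf c $ l * dl (tgt l))"
    unfolding inner_vec_def by (simp add: sum.distrib distrib_left)
  have E: "(\<Sum>l\<in>UNIV. xf c $ l * dl (tgt l)) = (\<Sum>j\<in>UNIV. dl j * (zz c j - q j))"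
  proof -
    have "(\<Sum>l\<in>UNIV. xf c $ l * dl (tgt l)) = (\<Sum>j\<in>UNIV. \<Sum>l\<in>{l. tgt l = j}. xf c $ l * dl (tgt l))"
      by (rule sum_group_fun[symmetric])
    also have "\<dots> = (\<Sum>j\<in>UNIV. dl j * (\<Sum>l\<in>{l. tgt l = j}. xf c $ l))"
      unfolding sum_distrib_left by (rule sum.cong[OF refl], rule sum.cong[OF refl]) auto
    also have "\<dots> = (\<Sum>j\<in>UNIV. dl j * (zz c j - q j))" unfolding zz_def by simp
    finally show ?thesis .
  qed
  have "(\<Sum>i\<in>UNIV. ww c i * rr c c' i) = (\<Sum>i\<in>UNIV. zz c i * dl i) - (xf c \<bullet> D + (\<Sum>j\<in>UNIV. dl j * (zz c j - q j)))"
    unfolding A B C Dx E ..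
  also have "\<dots> = (\<Sum>i\<in>UNIV. q i * dl i) - xf c \<bullet> D"
    by (simp add: sum_subtractf right_diff_distrib algebra_simps)
  finally show ?thesis unfolding P D_def by simp
qed

lemma rbound:
  assumes c: "c \<in> R" and c': "c' \<in> R" and i: "i \<noteq> d" and B: "0 \<le> B" "theta i * B \<le> 1"
    and a: "\<And>l. src l = i \<Longrightarrow> \<bar>(c' - c) $ l + (mu c' (tgt l) - mu c (tgt l)) - (mu c' i - mu c i)\<bar> \<le> B"
  shows "\<bar>rr c c' i\<bar> \<le> theta i * B^2"
proof -
  define a where "a = (\<lambda>l. (c' - c) $ l + (mu c' (tgt l) - mu c (tgt l)) - (mu c' i - mu c i))"
  have th: "0 < theta i" by (rule theta_pos)
  have ppnn: "\<And>l. l \<in> {l. src l = i} \<Longrightarrow> 0 \<le> pp c l" using pp_nn[OF c] i by auto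
  have e1: "(\<Sum>l\<in>{l. src l = i}. pp c l * exp (- theta i * a l)) = 1"
  proof -
    have "(\<Sum>l\<in>{l. src l = i}. pp c l * exp (- theta i * a l)) = EE c' (mu c') i"
      unfolding EE_def
    proof (rule sum.cong[OF refl])
      fix l assume "l \<in> {l. src l = i}"
      hence l: "src l = i" by simp
      have "pp c l * exp (- theta i * a l) = alpha l * (exp (- theta i * (c $ l + mu c (tgt l) - mu c i)) * exp (- theta i * a l))"
        using pp_eq[OF c, of l] l i by simp
      also have "exp (- theta i * (c $ l + mu c (tgt l) - mu c i)) * exp (- theta i * a l)
          = exp (- theta i * (c' $ l + mu c' (tgt l) - mu c' i))"
        unfolding a_def exp_add[symmetric] by (simp add: algebra_simps)
      finally show "pp c l * exp (- theta i * a l) = alpha l * exp (- theta i * (c' $ l + mu c' (tgt l) - mu c' i))" .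
    qed
    thus ?thesis using mu_eq1[OF c' i] by simp
  qed
  have e2: "(\<Sum>l\<in>{l. src l = i}. pp c l) = 1" by (rule pp_sum[OF c i])
  have key: "(\<Sum>l\<in>{l. src l = i}. pp c l * (exp (- theta i * a l) - 1 - (- theta i * a l)))
      = theta i * (\<Sum>l\<in>{l. src l = i}. pp c l * a l)"
    using e1 e2 by (simp add: algebra_simps sum_subtractf sum.distrib sum_distrib_left)
  have "\<bar>\<Sum>l\<in>{l. src l = i}. pp c l * (exp (- theta i * a l) - 1 - (- theta i * a l))\<bar>
      \<le> (\<Sum>l\<in>{l. src l = i}. pp c l * (theta i * B)^2)"
  proof (rule order_trans[OF sum_abs], rule sum_mono)
    fix l assume l: "l \<in> {l. src l = i}"
    have al: "\<bar>a l\<bar> \<le> B" using a l unfolding a_def by simp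
    have u: "\<bar>- theta i * a l\<bar> \<le> theta i * B" using al th by (simp add: abs_mult mult_left_mono)
    hence "\<bar>- theta i * a l\<bar> \<le> 1" using B by linarith
    hence "\<bar>exp (- theta i * a l) - 1 - (- theta i * a l)\<bar> \<le> (- theta i * a l)^2" by (rule expb)
    also have "\<dots> \<le> (theta i * B)^2" using u by (simp add: power2_le_iff_abs_le B th)
    finally show "\<bar>pp c l * (exp (- theta i * a l) - 1 - (- theta i * a l))\<bar> \<le> pp c l * (theta i * B)^2"
      using ppnn[OF l] by (simp add: abs_mult mult_left_mono)
  qed
  also have "\<dots> = (theta i * B)^2" using e2 by (simp add: sum_distrib_right[symmetric])
  finally have "theta i * \<bar>\<Sum>l\<in>{l. src l = i}. pp c l * a l\<bar> \<le> theta i * (theta i * B^2)"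
    unfolding key using th by (simp add: abs_mult power2_eq_square algebra_simps)
  hence s: "\<bar>\<Sum>l\<in>{l. src l = i}. pp c l * a l\<bar> \<le> theta i * B^2" using th by simp
  have "(\<Sum>l\<in>{l. src l = i}. pp c l * a l) = - rr c c' i"
  proof -
    have "(\<Sum>l\<in>{l. src l = i}. pp c l * a l) = (\<Sum>l\<in>{l. src l = i}. pp c l * ((c' - c) $ l + (mu c' (tgt l) - mu c (tgt l))))
        - (\<Sum>l\<in>{l. src l = i}. pp c l) * (mu c' i - mu c i)"
      unfolding a_def by (simp add: sum_subtractf right_diff_distrib sum_distrib_right)
    thus ?thesis unfolding rr_def e2 by simp
  qed
  thus ?thesis using s by simp
qed

end

context ngev begin

lemma mu_conc_pt:
  assumes "convex S" "S \<subseteq> R" "c1 \<in> S" "c2 \<in> S" "0 \<le> u" "0 \<le> v" "u + v = 1"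
  shows "u * mu c1 i + v * mu c2 i \<le> mu (u *\<^sub>R c1 + v *\<^sub>R c2) i"
proof -
  have "convex_on S (\<lambda>c. - mu c i)" using mu_concave[OF assms(1,2)] unfolding concave_on_def .
  hence "- mu (u *\<^sub>R c1 + v *\<^sub>R c2) i \<le> u * - mu c1 i + v * - mu c2 i"
    using assms(3-7) unfolding convex_on_def by blast
  thus ?thesis by simp
qed

lemma Phi_concave:
  assumes "convex S" "S \<subseteq> R"
  shows "concave_on S (Phi Orig)"
  unfolding concave_on_def convex_on_def
proof (intro conjI ballI allI impI)
  show "convex S" by fact
  fix c1 c2 and u v :: real
  assume c: "c1 \<in> S" "c2 \<in> S" and uv: "0 \<le> u" "0 \<le> v" "u + v = 1"
  have cS: "u *\<^sub>R c1 + v *\<^sub>R c2 \<in> S" using assms(1) c uv by (rule convexD)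
  have R: "c1 \<in> R" "c2 \<in> R" "u *\<^sub>R c1 + v *\<^sub>R c2 \<in> R" using c cS assms(2) by auto
  have "u * Phi Orig c1 + v * Phi Orig c2 = (\<Sum>i\<in>UNIV. (u * mu c1 i + v * mu c2 i) * qtilde Orig q d i)"
    unfolding Phi_def by (simp add: sum_distrib_left sum.distrib algebra_simps)
  also have "\<dots> \<le> (\<Sum>i\<in>UNIV. mu (u *\<^sub>R c1 + v *\<^sub>R c2) i * qtilde Orig q d i)"
  proof (rule sum_mono)
    fix i
    show "(u * mu c1 i + v * mu c2 i) * qtilde Orig q d i \<le> mu (u *\<^sub>R c1 + v *\<^sub>R c2) i * qtilde Orig q d i"
    proof (cases "i = d")
      case True thus ?thesis using mu_d R by simp
    next
      case False
      hence "qtilde Orig q d i = q i" unfolding qtilde_def by simp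
      thus ?thesis using mu_conc_pt[OF assms c uv, of i] q_nn[of i] by (simp add: mult_right_mono)
    qed
  qed
  finally show "- Phi Orig (u *\<^sub>R c1 + v *\<^sub>R c2) \<le> u * - Phi Orig c1 + v * - Phi Orig c2"
    unfolding Phi_def by simp
qed

lemma Phi_deriv:
  assumes ci: "c \<in> interior R"
  shows "(Phi Orig has_derivative (\<lambda>h. xf c \<bullet> h)) (at c)"
proof -
  obtain r0 where r0: "0 < r0" "ball c r0 \<subseteq> R" using ci mem_interior by blast
  define r where "r = r0 / 4"
  have r: "0 < r" "ball c (3*r) \<subseteq> R" "cball c r \<subseteq> R" using r0 unfolding r_def
    by (auto simp: subset_eq)
  have cR: "c \<in> R" using r by auto
  have lip1: "\<exists>K. \<forall>x\<in>cball c r. \<forall>y\<in>cball c r. \<bar>mu x j - mu y j\<bar> \<le> K * norm (x - y)" for j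
  proof -
    have "convex_on (ball c (3*r)) (\<lambda>x. - mu x j)"
      using mu_concave[OF convex_ball r(2)] unfolding concave_on_def .
    moreover have "cball c (2*r) \<subseteq> ball c (3*r)" using r by (auto simp: subset_eq)
    ultimately obtain K where "\<forall>x\<in>cball c r. \<forall>y\<in>cball c r. \<bar>- mu x j - - mu y j\<bar> \<le> K * norm (x - y)"
      using convex_lipschitz[OF open_ball _ _ r(1)] by blast
    thus ?thesis by (intro exI[of _ K]) (simp add: abs_minus_commute)
  qed
  then obtain Kf where Kf: "\<And>j x y. x \<in> cball c r \<Longrightarrow> y \<in> cball c r \<Longrightarrow> \<bar>mu x j - mu y j\<bar> \<le> Kf j * norm (x - y)"
    by metis
  define K where "K = (\<Sum>j\<in>UNIV. \<bar>Kf j\<bar>)"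
  have K0: "0 \<le> K" unfolding K_def by (simp add: sum_nonneg)
  have lip: "\<bar>mu x j - mu y j\<bar> \<le> K * norm (x - y)" if "x \<in> cball c r" "y \<in> cball c r" for x y j
  proof -
    have "Kf j \<le> K" unfolding K_def using member_le_sum[of j UNIV "\<lambda>j. \<bar>Kf j\<bar>"] by force
    hence "Kf j * norm (x - y) \<le> K * norm (x - y)" by (intro mult_right_mono) auto
    thus ?thesis using Kf[OF that, of j] by linarith
  qed
  define Th where "Th = (\<Sum>i\<in>UNIV. theta i)"
  have thle: "theta i \<le> Th" for i unfolding Th_def
    by (rule member_le_sum) (auto intro: less_imp_le theta_pos)
  have Th0: "0 < Th" using thle[of d] theta_pos[of d] by linarith
  define Cz where "Cz = (\<Sum>i\<in>UNIV. \<bar>ww c i\<bar> * theta i)"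
  have Cz0: "0 \<le> Cz" unfolding Cz_def
  proof (rule sum_nonneg)
    fix i show "0 \<le> \<bar>ww c i\<bar> * theta i" using theta_pos[of i] by simp
  qed
  define A where "A = 1 + 2 * K"
  have A1: "1 \<le> A" unfolding A_def using K0 by simp
  show ?thesis
    unfolding has_derivative_at_alt
  proof (intro conjI allI impI)
    show "bounded_linear ((\<bullet>) (xf c))" by (rule bounded_linear_inner_right)
    fix e :: real assume e: "0 < e"
    define dd where "dd = min r (min (1 / (Th * A)) (e / (Cz * A^2 + 1)))"
    have dd: "0 < dd" unfolding dd_def using r e Th0 A1 Cz0 by (auto intro!: divide_pos_pos add_nonneg_pos)
    show "\<exists>d>0. \<forall>y. norm (y - c) < d \<longrightarrow> norm (Phi Orig y - Phi Orig c - xf c \<bullet> (y - c)) \<le> e * norm (y - c)"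
    proof (intro exI[of _ dd] conjI allI impI dd)
      fix y assume y: "norm (y - c) < dd"
      define n where "n = norm (y - c)"
      have n0: "0 \<le> n" unfolding n_def by simp
      have ycb: "y \<in> cball c r" using y unfolding dd_def by (auto simp: dist_norm norm_minus_commute)
      have ccb: "c \<in> cball c r" using r by simp
      have yR: "y \<in> R" using ycb r by auto
      have dlj: "\<bar>mu y j - mu c j\<bar> \<le> K * n" for j unfolding n_def by (rule lip[OF ycb ccb])
      have nA: "n * A \<le> 1 / Th"
      proof -
        have "n \<le> 1 / (Th * A)" using y unfolding n_def dd_def by simp
        thus ?thesis using A1 Th0 by (simp add: field_simps)
      qed
      have nC: "n * (Cz * A^2) \<le> e"
      proof -
        have "n \<le> e / (Cz * A^2 + 1)" using y unfolding n_def dd_def by simp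
        moreover have pos: "0 < Cz * A^2 + 1" using Cz0 by (simp add: add_nonneg_pos)
        ultimately have "n * (Cz * A^2 + 1) \<le> e" by (simp add: le_divide_eq)
        thus ?thesis using n0 by (simp add: algebra_simps)
      qed
      have trm: "\<bar>ww c i * rr c y i\<bar> \<le> \<bar>ww c i\<bar> * theta i * (A * n)^2" for i
      proof (cases "i = d")
        case True thus ?thesis unfolding ww_def by simp
      next
        case False
        have B0: "0 \<le> A * n" using A1 n0 by simp
        have B1: "theta i * (A * n) \<le> 1"
        proof -
          have "theta i * (A * n) \<le> Th * (A * n)" using thle[of i] B0 by (rule mult_right_mono)
          also have "\<dots> = Th * (n * A)" by simp
          also have "\<dots> \<le> Th * (1 / Th)" using nA Th0 by (intro mult_left_mono) auto
          also have "\<dots> = 1" using Th0 by simp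
          finally show ?thesis .
        qed
        have ab: "\<bar>(y - c) $ l + (mu y (tgt l) - mu c (tgt l)) - (mu y i - mu c i)\<bar> \<le> A * n" for l
        proof -
          have "\<bar>(y - c) $ l\<bar> \<le> n" unfolding n_def by (rule component_le_norm_cart)
          moreover have "A * n = n + K * n + K * n" unfolding A_def by (simp add: algebra_simps)
          ultimately show ?thesis using dlj[of "tgt l"] dlj[of i] unfolding abs_le_iff by linarith
        qed
        have "\<bar>rr c y i\<bar> \<le> theta i * (A * n)^2" by (rule rbound[OF cR yR False B0 B1 ab])
        hence "\<bar>ww c i\<bar> * \<bar>rr c y i\<bar> \<le> \<bar>ww c i\<bar> * (theta i * (A * n)^2)" by (intro mult_left_mono) auto
        thus ?thesis by (simp add: abs_mult algebra_simps)
      qed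
      have "\<bar>Phi Orig y - Phi Orig c - xf c \<bullet> (y - c)\<bar> = \<bar>\<Sum>i\<in>UNIV. ww c i * rr c y i\<bar>"
        using identity[OF cR yR] by simp
      also have "\<dots> \<le> (\<Sum>i\<in>UNIV. \<bar>ww c i * rr c y i\<bar>)" by (rule sum_abs)
      also have "\<dots> \<le> (\<Sum>i\<in>UNIV. \<bar>ww c i\<bar> * theta i * (A * n)^2)" by (rule sum_mono) (rule trm)
      also have "\<dots> = Cz * A^2 * n^2" unfolding Cz_def by (simp add: sum_distrib_right power_mult_distrib mult.assoc)
      also have "\<dots> = (n * (Cz * A^2)) * n" by (simp add: power2_eq_square)
      also have "\<dots> \<le> e * n" using nC n0 by (rule mult_right_mono)
      finally show "norm (Phi Orig y - Phi Orig c - xf c \<bullet> (y - c)) \<le> e * norm (y - c)"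
        unfolding n_def by simp
    qed
  qed
qed

end

context costmap begin

lemma cstar_sub': "x \<in> cm ` Ort \<Longrightarrow> y \<in> cm ` Ort \<Longrightarrow> Cstar cm x + cinv cm x \<bullet> (y - x) \<le> Cstar cm y"
  using cstar_sub[of x y] by (simp add: inner_commute)

lemma cstar_convex:
  assumes "convex S" "S \<subseteq> cm ` Ort"
  shows "convex_on S (Cstar cm)"
  by (rule convex_from_sub[OF assms(1), of _ "cinv cm"]) (use assms(2) cstar_sub' in blast)

lemma cinv_cont:
  assumes ci: "c \<in> interior (cm ` Ort)"
  shows "isCont (cinv cm) c"
proof -
  obtain r0 where r0: "0 < r0" "ball c r0 \<subseteq> cm ` Ort" using ci mem_interior by blast
  define r where "r = r0 / 4"
  have r: "0 < r" "ball c (3*r) \<subseteq> cm ` Ort" "cball c (2*r) \<subseteq> cm ` Ort" "cball c (2 * r) \<subseteq> ball c (3*r)"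
    using r0 unfolding r_def by (auto simp: subset_eq)
  have "convex_on (ball c (3*r)) (Cstar cm)" by (rule cstar_convex[OF convex_ball r(2)])
  hence "continuous_on (ball c (3*r)) (Cstar cm)" by (rule convex_on_continuous[OF open_ball])
  hence "continuous_on (cball c (2*r)) (Cstar cm)" using r(4) continuous_on_subset by blast
  hence "compact (Cstar cm ` cball c (2*r))" by (intro compact_continuous_image) auto
  hence "bounded (Cstar cm ` cball c (2*r))" by (rule compact_imp_bounded)
  then obtain M where M0: "\<forall>x\<in>Cstar cm ` cball c (2*r). norm x \<le> M" unfolding bounded_iff by blast
  have M: "\<And>z. z \<in> cball c (2*r) \<Longrightarrow> \<bar>Cstar cm z\<bar> \<le> M" using M0 by auto
  define Bd where "Bd = real CARD('l) * (2 * M / r)"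
  have bnd: "norm (cinv cm c') \<le> Bd" if c': "c' \<in> cball c r" for c'
  proof -
    have c'R: "c' \<in> cm ` Ort" using c' r by auto
    have comp: "\<bar>cinv cm c' $ i\<bar> \<le> 2 * M / r" for i
    proof -
      define c'' where "c'' = c' + r *\<^sub>R axis i 1"
      have "dist c' c'' = r" unfolding c''_def dist_norm using r by simp
      hence "dist c c'' \<le> dist c c' + r" using dist_triangle[of c c'' c'] by simp
      hence c''b: "c'' \<in> cball c (2*r)" using c' r by simp
      have c'b: "c' \<in> cball c (2*r)" using c' r by simp
      have "Cstar cm c' + cinv cm c' \<bullet> (c'' - c') \<le> Cstar cm c''"
        by (rule cstar_sub'[OF c'R]) (use c''b r in auto)
      moreover have "cinv cm c' \<bullet> (c'' - c') = r * cinv cm c' $ i" unfolding c''_def by (simp add: inner_axis)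
      ultimately have "r * cinv cm c' $ i \<le> 2 * M" using M[OF c''b] M[OF c'b] by (simp add: abs_le_iff)
      hence up: "cinv cm c' $ i \<le> 2 * M / r" using r by (simp add: field_simps)
      have "0 \<le> cinv cm c' $ i" using cinv_in[OF c'R] unfolding nonneg_orthant_def by simp
      thus ?thesis using up by simp
    qed
    have "norm (cinv cm c') \<le> (\<Sum>i\<in>UNIV. \<bar>cinv cm c' $ i\<bar>)" by (rule norm_le_l1_cart)
    also have "\<dots> \<le> (\<Sum>i\<in>(UNIV::'l set). 2 * M / r)" by (rule sum_mono) (rule comp)
    also have "\<dots> = Bd" unfolding Bd_def by simp
    finally show ?thesis .
  qed
  define KK where "KK = Ort \<inter> cball 0 Bd"
  have cK: "compact KK" unfolding KK_def by (intro closed_Int_compact orth_closed compact_cball)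
  have contK: "continuous_on KK cm" using cont unfolding KK_def by (rule continuous_on_subset) auto
  have invK: "\<forall>x\<in>KK. cinv cm (cm x) = x" unfolding KK_def using cinv_eq by auto
  have ci2: "continuous_on (cm ` KK) (cinv cm)" by (rule continuous_on_inv[OF contK cK invK])
  have "ball c r \<subseteq> cm ` KK"
  proof
    fix c' assume c': "c' \<in> ball c r"
    hence c'R: "c' \<in> cm ` Ort" using r by auto
    have "cinv cm c' \<in> KK" unfolding KK_def using cinv_in[OF c'R] bnd[of c'] c' by auto
    moreover have "c' = cm (cinv cm c')" using cm_cinv[OF c'R] by simp
    ultimately show "c' \<in> cm ` KK" by blast
  qed
  hence "continuous_on (ball c r) (cinv cm)" using ci2 continuous_on_subset by blast
  moreover have "c \<in> interior (ball c r)" using r(1) by simp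
  ultimately show ?thesis by (rule continuous_on_interior)
qed

lemma cstar_deriv:
  assumes ci: "c \<in> interior (cm ` Ort)"
  shows "(Cstar cm has_derivative (\<lambda>h. cinv cm c \<bullet> h)) (at c)"
proof (rule sub_deriv[OF open_interior ci])
  fix x y assume x: "x \<in> interior (cm ` Ort)" and y: "y \<in> interior (cm ` Ort)"
  have xR: "x \<in> cm ` Ort" by (rule subsetD[OF interior_subset x])
  have yR: "y \<in> cm ` Ort" by (rule subsetD[OF interior_subset y])
  from xR yR show "Cstar cm x + cinv cm x \<bullet> (y - x) \<le> Cstar cm y" by (rule cstar_sub')
next
  show "isCont (cinv cm) c" by (rule cinv_cont[OF ci])
qed

end

context ngev begin

lemma Phi_concave':
  "convex S \<Longrightarrow> S \<subseteq> R \<Longrightarrow> concave_on S (\<lambda>c. \<Sum>i\<in>UNIV. mu_of src tgt alpha theta d c i * qtilde Orig q d i)"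
  using Phi_concave[of S Orig] unfolding Phi_def[abs_def] .

lemma Phi_deriv':
  "c \<in> interior R \<Longrightarrow> ((\<lambda>c. \<Sum>i\<in>UNIV. mu_of src tgt alpha theta d c i * qtilde Orig q d i)
     has_derivative (\<lambda>h. ngev_flow src tgt alpha theta d q c \<bullet> h)) (at c)"
  using Phi_deriv[of c Orig] unfolding Phi_def[abs_def] xf_def .

end

lemma concave_on_add':
  "concave_on S f \<Longrightarrow> concave_on S g \<Longrightarrow> concave_on S (\<lambda>x. f x + g x)"
  unfolding concave_on_def using convex_on_add by fastforce

lemma concave_on_sum':
  assumes "finite A" "convex S" "\<And>a. a \<in> A \<Longrightarrow> concave_on S (f a)"
  shows "concave_on S (\<lambda>x. \<Sum>a\<in>A. f a x)"
  using assms
proof (induction A rule: finite_induct)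
  case empty
  show ?case unfolding concave_on_def using empty.prems(1) by (simp add: convex_on_const)
next
  case (insert a A)
  have "concave_on S (\<lambda>x. f a x + (\<Sum>a\<in>A. f a x))"
    by (rule concave_on_add') (use insert in auto)
  thus ?case using insert by simp
qed

theorem lemma1:
  fixes src tgt :: "'l::finite \<Rightarrow> 'n::finite"
    and Orig D :: "'n set"
    and q :: "'n \<Rightarrow> 'n \<Rightarrow> real"
    and theta :: "'n \<Rightarrow> 'n \<Rightarrow> real"
    and alpha :: "'n \<Rightarrow> 'l \<Rightarrow> real"
    and cm :: "real ^ 'l \<Rightarrow> real ^ 'l"
  assumes simple_graph: "inj (\<lambda>l. (src l, tgt l))"
    and q_nonneg: "\<forall>d\<in>D. \<forall>i. 0 \<le> q d i"
    and theta_pos: "\<forall>d\<in>D. \<forall>i. 0 < theta d i"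
    and alpha_nonneg: "\<forall>d\<in>D. \<forall>l. 0 \<le> alpha d l"
    and alpha_sum: "\<forall>d\<in>D. \<forall>j. (\<Sum>l\<in>{l. tgt l = j}. alpha d l) = 1"
    and mu_wellposed: "\<forall>d\<in>D. \<forall>c\<in>cm ` nonneg_orthant.
           \<exists>!mu. mu_eqs src tgt (alpha d) (theta d) d c mu"
    and flow_wellposed: "\<forall>d\<in>D. \<forall>t\<in>cm ` nonneg_orthant.
           \<exists>!x. flow_eqs src tgt
                  (ngev_prob src tgt (alpha d) (theta d) (mu_of src tgt (alpha d) (theta d) d t) t)
                  d (q d) x"
    and cm_cont: "continuous_on nonneg_orthant cm"
    and cm_range: "cm ` nonneg_orthant \<subseteq> nonneg_orthant"
    and cm_sym_jacobian: "\<forall>X\<in>nonneg_orthant. \<exists>J.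
           (cm has_derivative J) (at X within nonneg_orthant) \<and> (\<forall>u v. J u \<bullet> v = u \<bullet> J v)"
    and cm_strict_mono: "\<forall>X\<in>nonneg_orthant. \<forall>Y\<in>nonneg_orthant.
           X \<noteq> Y \<longrightarrow> 0 < (cm X - cm Y) \<bullet> (X - Y)"
  shows "(\<forall>S. convex S \<and> S \<subseteq> cm ` nonneg_orthant \<longrightarrow>
            concave_on S (Z_FD_D src tgt alpha theta Orig D q cm))
       \<and> continuous_on (interior (cm ` nonneg_orthant))
            (\<lambda>c. total_flow src tgt alpha theta D q c - cinv cm c)
       \<and> (\<forall>c\<in>interior (cm ` nonneg_orthant).
            (Z_FD_D src tgt alpha theta Orig D q cm has_derivative
               (\<lambda>h. (total_flow src tgt alpha theta D q c - cinv cm c) \<bullet> h)) (at c))"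
proof -
  define R where "R = cm ` nonneg_orthant"
  interpret CM: costmap cm
    by unfold_locales (use cm_cont cm_range cm_sym_jacobian cm_strict_mono in auto)
  have NG: "ngev src tgt (alpha d) (theta d) d (q d) R" if dD: "d \<in> D" for d
  proof unfold_locales
    fix i show "0 < theta d i" using theta_pos dD by blast
  next
    fix l show "0 \<le> alpha d l" using alpha_nonneg dD by blast
  next
    fix i show "0 \<le> q d i" using q_nonneg dD by blast
  next
    fix c assume "c \<in> R"
    thus "\<exists>!mu. mu_eqs src tgt (alpha d) (theta d) d c mu"
      unfolding R_def by (rule bspec[OF bspec[OF mu_wellposed dD]])
  next
    fix t assume "t \<in> R"
    thus "\<exists>!x. flow_eqs src tgt (ngev_prob src tgt (alpha d) (theta d) (mu_of src tgt (alpha d) (theta d) d t) t) d (q d) x"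
      unfolding R_def by (rule bspec[OF bspec[OF flow_wellposed dD]])
  qed
  define F where "F = (\<lambda>d c. \<Sum>i\<in>UNIV. mu_of src tgt (alpha d) (theta d) d c i * qtilde Orig (q d) d i)"
  define G where "G = (\<lambda>c. total_flow src tgt alpha theta D q c - cinv cm c)"
  have Zeq: "Z_FD_D src tgt alpha theta Orig D q cm = (\<lambda>c. - Cstar cm c + (\<Sum>d\<in>D. F d c))"
    unfolding Z_FD_D_def F_def by (rule ext) simp
  have P1: "concave_on S (Z_FD_D src tgt alpha theta Orig D q cm)" if S: "convex S" "S \<subseteq> R" for S
  proof -
    have "convex_on S (Cstar cm)" by (rule CM.cstar_convex) (use S in \<open>auto simp: R_def\<close>)
    hence c1: "concave_on S (\<lambda>c. - Cstar cm c)" unfolding concave_on_def by simp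
    have c2: "concave_on S (\<lambda>c. \<Sum>d\<in>D. F d c)"
      by (rule concave_on_sum') (use S ngev.Phi_concave'[OF NG] in \<open>auto simp: F_def\<close>)
    show ?thesis unfolding Zeq by (rule concave_on_add'[OF c1 c2])
  qed
  have P3: "(Z_FD_D src tgt alpha theta Orig D q cm has_derivative (\<lambda>h. G c \<bullet> h)) (at c)"
    if c: "c \<in> interior R" for c
  proof -
    have d1: "((\<lambda>c. - Cstar cm c) has_derivative (\<lambda>h. - (cinv cm c \<bullet> h))) (at c)"
      by (rule has_derivative_minus[OF CM.cstar_deriv]) (use c in \<open>simp add: R_def\<close>)
    have d2: "((\<lambda>c. \<Sum>d\<in>D. F d c) has_derivative (\<lambda>h. \<Sum>d\<in>D. ngev_flow src tgt (alpha d) (theta d) d (q d) c \<bullet> h)) (at c)"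
      by (rule has_derivative_sum) (use c ngev.Phi_deriv'[OF NG] in \<open>auto simp: F_def\<close>)
    have "(Z_FD_D src tgt alpha theta Orig D q cm has_derivative
           (\<lambda>h. - (cinv cm c \<bullet> h) + (\<Sum>d\<in>D. ngev_flow src tgt (alpha d) (theta d) d (q d) c \<bullet> h))) (at c)"
      unfolding Zeq by (rule has_derivative_add[OF d1 d2])
    moreover have "(\<lambda>h. - (cinv cm c \<bullet> h) + (\<Sum>d\<in>D. ngev_flow src tgt (alpha d) (theta d) d (q d) c \<bullet> h))
        = (\<lambda>h. G c \<bullet> h)"
      unfolding G_def total_flow_def by (rule ext) (simp add: inner_diff_left inner_sum_left)
    ultimately show ?thesis by simp
  qed
  have P2: "isCont G c" if c: "c \<in> interior R" for c
  proof -
    obtain r where r: "0 < r" "ball c r \<subseteq> R" using c mem_interior by blast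
    have bi: "ball c r \<subseteq> interior R" using r(2) by (rule interior_maximal) simp
    have "concave_on (ball c r) (Z_FD_D src tgt alpha theta Orig D q cm)"
      by (rule P1[OF convex_ball r(2)])
    hence cv: "convex_on (ball c r) (\<lambda>x. - Z_FD_D src tgt alpha theta Orig D q cm x)"
      unfolding concave_on_def .
    have dv: "((\<lambda>x. - Z_FD_D src tgt alpha theta Orig D q cm x) has_derivative (\<lambda>h. (- G x) \<bullet> h)) (at x)"
      if x: "x \<in> ball c r" for x
    proof -
      have "((\<lambda>x. - Z_FD_D src tgt alpha theta Orig D q cm x) has_derivative (\<lambda>h. - (G x \<bullet> h))) (at x)"
        by (rule has_derivative_minus[OF P3]) (use x bi in auto)
      thus ?thesis by simp
    qed
    have "isCont (\<lambda>x. - G x) c" by (rule grad_cont[OF open_ball cv dv]) (use r in auto)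
    hence "isCont (\<lambda>x. - (- G x)) c" by (rule continuous_minus)
    thus ?thesis by simp
  qed
  show ?thesis
  proof (intro conjI allI impI ballI)
    fix S assume "convex S \<and> S \<subseteq> cm ` nonneg_orthant"
    thus "concave_on S (Z_FD_D src tgt alpha theta Orig D q cm)" using P1 unfolding R_def by blast
  next
    show "continuous_on (interior (cm ` nonneg_orthant)) (\<lambda>c. total_flow src tgt alpha theta D q c - cinv cm c)"
      using P2 unfolding G_def R_def by (intro continuous_at_imp_continuous_on) blast
  next
    fix c assume "c \<in> interior (cm ` nonneg_orthant)"
    thus "(Z_FD_D src tgt alpha theta Orig D q cm has_derivative
               (\<lambda>h. (total_flow src tgt alpha theta D q c - cinv cm c) \<bullet> h)) (at c)"
      using P3 unfolding G_def R_def by blast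
  qed
qed

end
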